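(* \textsc{Max $k$-SAT} (as defined in the context) can be solved in time $O(2^m)$ up to factors polynomial in the input size, where $m$ is the number of clauses of the input formula.
   Context: \textsc{Max $k$-SAT} (here a cardinality-constrained satisfiability problem): the input is a CNF formula $\phi$ with $m$ clauses over a set $X$ of $n$ variables, and integers $k$ and $p$. The question is whether there is a subset $S\subseteq X$ with $|S|\le k$ such that the assignment setting the variables of $S$ to true and all variables of $X\setminus S$ to false satisfies at least $p$ clauses of $\phi$. *)

theory Defs
  imports Complex_Main "HOL-Library.Log_Nat"
begin

text \<open>Variables are natural numbers; the variable set is X = {0..<n}.
  A literal is a pair (b, v): (True, v) is the positive literal v, (False, v) is its negation.\<close>

type_synonym lit = "bool \<times> nat"
type_synonym clause = "lit list"
type_synonym cnf = "clause list"

definition wf_cnf :: "nat \<Rightarrow> cnf \<Rightarrow> bool" where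
  "wf_cnf n phi \<longleftrightarrow> (\<forall>C\<in>set phi. \<forall>(b, v)\<in>set C. v < n)"

text \<open>Clause C is satisfied by the assignment setting exactly the variables of S true.\<close>
definition clause_sat :: "nat set \<Rightarrow> clause \<Rightarrow> bool" where
  "clause_sat S C \<longleftrightarrow> (\<exists>(b, v)\<in>set C. (v \<in> S) = b)"

definition num_sat :: "nat set \<Rightarrow> cnf \<Rightarrow> nat" where
  "num_sat S phi = length (filter (clause_sat S) phi)"

definition max_k_sat :: "nat \<Rightarrow> cnf \<Rightarrow> nat \<Rightarrow> nat \<Rightarrow> bool" where
  "max_k_sat n phi k p \<longleftrightarrow>
     (\<exists>S. S \<subseteq> {0..<n} \<and> card S \<le> k \<and> num_sat S phi \<ge> p)"

definition encode_clause :: "clause \<Rightarrow> nat list" where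
  "encode_clause C = length C # concat (map (\<lambda>(b, v). [if b then 1 else 0, v]) C)"

definition encode :: "nat \<Rightarrow> cnf \<Rightarrow> nat \<Rightarrow> nat \<Rightarrow> nat list" where
  "encode n phi k p = [n, k, p, length phi] @ concat (map encode_clause phi)"

definition input_size :: "nat list \<Rightarrow> nat" where
  "input_size xs = (\<Sum>x\<leftarrow>xs. floorlog 2 x + 1)"

text \<open>State: (registers, memory). Registers are addressed directly, memory indirectly
  through registers. The input is placed in memory cells 0..len-1; the answer is
  read from register 0 (nonzero = yes).\<close>

datatype com =
    Skip
  | Const nat nat
  | Add nat nat nat
  | Sub nat nat nat        (* r := a - b (truncated) *)
  | Load nat nat
  | Store nat nat
  | Seq com com
  | If nat com com
  | While nat com

type_synonym state = "(nat \<Rightarrow> nat) \<times> (nat \<Rightarrow> nat)"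

inductive exec :: "com \<Rightarrow> state \<Rightarrow> nat \<Rightarrow> state \<Rightarrow> bool" where
  Skip: "exec Skip s 1 s"
| Const: "exec (Const r c) (R, M) 1 (R(r := c), M)"
| Add: "exec (Add r a b) (R, M) 1 (R(r := R a + R b), M)"
| Sub: "exec (Sub r a b) (R, M) 1 (R(r := R a - R b), M)"
| Load: "exec (Load r a) (R, M) 1 (R(r := M (R a)), M)"
| Store: "exec (Store a b) (R, M) 1 (R, M(R a := R b))"
| Seq: "exec c1 s t1 s1 \<Longrightarrow> exec c2 s1 t2 s2 \<Longrightarrow> exec (Seq c1 c2) s (t1 + t2) s2"
| IfT: "fst s r \<noteq> 0 \<Longrightarrow> exec c1 s t s' \<Longrightarrow> exec (If r c1 c2) s (t + 1) s'"
| IfF: "fst s r = 0 \<Longrightarrow> exec c2 s t s' \<Longrightarrow> exec (If r c1 c2) s (t + 1) s'"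
| WhileF: "fst s r = 0 \<Longrightarrow> exec (While r c) s 1 s"
| WhileT: "fst s r \<noteq> 0 \<Longrightarrow> exec c s t1 s1 \<Longrightarrow> exec (While r c) s1 t2 s2
           \<Longrightarrow> exec (While r c) s (t1 + t2 + 1) s2"

definition init_state :: "nat list \<Rightarrow> state" where
  "init_state xs = ((\<lambda>_. 0), (\<lambda>i. if i < length xs then xs ! i else 0))"

end

theory Submission
  imports Defs
begin


definition wp :: "com \<Rightarrow> (nat \<Rightarrow> state \<Rightarrow> bool) \<Rightarrow> state \<Rightarrow> bool" where
  "wp c Q s \<longleftrightarrow> (\<exists>t s'. exec c s t s' \<and> Q t s')"

inductive_cases SkipE: "exec Skip s t s'"
inductive_cases ConstE: "exec (Const r c) s t s'"
inductive_cases AddE: "exec (Add r a b) s t s'"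
inductive_cases SubE: "exec (Sub r a b) s t s'"
inductive_cases LoadE: "exec (Load r a) s t s'"
inductive_cases StoreE: "exec (Store a b) s t s'"
inductive_cases SeqE: "exec (Seq c1 c2) s t s'"
inductive_cases IfE: "exec (If r c1 c2) s t s'"
inductive_cases WhileE: "exec (While r c) s t s'"

lemma wp_Skip[simp]: "wp Skip Q s = Q 1 s"
proof
  assume "wp Skip Q s" then show "Q 1 s" unfolding wp_def by (auto elim: SkipE)
next
  assume "Q 1 s" with exec.Skip[of s] show "wp Skip Q s" unfolding wp_def by blast
qed

lemma wp_Const[simp]: "wp (Const r c) Q s = Q 1 ((fst s)(r := c), snd s)"
proof
  assume "wp (Const r c) Q s" then show "Q 1 ((fst s)(r := c), snd s)"
    unfolding wp_def by (auto elim: ConstE)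
next
  assume "Q 1 ((fst s)(r := c), snd s)"
  moreover have "exec (Const r c) s 1 ((fst s)(r := c), snd s)" using exec.Const[of r c "fst s" "snd s"] by simp
  ultimately show "wp (Const r c) Q s" unfolding wp_def by blast
qed

lemma wp_Add[simp]: "wp (Add r a b) Q s = Q 1 ((fst s)(r := fst s a + fst s b), snd s)"
proof
  assume "wp (Add r a b) Q s" then show "Q 1 ((fst s)(r := fst s a + fst s b), snd s)"
    unfolding wp_def by (auto elim: AddE)
next
  assume "Q 1 ((fst s)(r := fst s a + fst s b), snd s)"
  moreover have "exec (Add r a b) s 1 ((fst s)(r := fst s a + fst s b), snd s)" using exec.Add[of r a b "fst s" "snd s"] by simp
  ultimately show "wp (Add r a b) Q s" unfolding wp_def by blast
qed

lemma wp_Sub[simp]: "wp (Sub r a b) Q s = Q 1 ((fst s)(r := fst s a - fst s b), snd s)"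
proof
  assume "wp (Sub r a b) Q s" then show "Q 1 ((fst s)(r := fst s a - fst s b), snd s)"
    unfolding wp_def by (auto elim: SubE)
next
  assume "Q 1 ((fst s)(r := fst s a - fst s b), snd s)"
  moreover have "exec (Sub r a b) s 1 ((fst s)(r := fst s a - fst s b), snd s)" using exec.Sub[of r a b "fst s" "snd s"] by simp
  ultimately show "wp (Sub r a b) Q s" unfolding wp_def by blast
qed

lemma wp_Load[simp]: "wp (Load r a) Q s = Q 1 ((fst s)(r := snd s (fst s a)), snd s)"
proof
  assume "wp (Load r a) Q s" then show "Q 1 ((fst s)(r := snd s (fst s a)), snd s)"
    unfolding wp_def by (auto elim: LoadE)
next
  assume "Q 1 ((fst s)(r := snd s (fst s a)), snd s)"
  moreover have "exec (Load r a) s 1 ((fst s)(r := snd s (fst s a)), snd s)" using exec.Load[of r a "fst s" "snd s"] by simp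
  ultimately show "wp (Load r a) Q s" unfolding wp_def by blast
qed

lemma wp_Store[simp]: "wp (Store a b) Q s = Q 1 (fst s, (snd s)(fst s a := fst s b))"
proof
  assume "wp (Store a b) Q s" then show "Q 1 (fst s, (snd s)(fst s a := fst s b))"
    unfolding wp_def by (auto elim: StoreE)
next
  assume "Q 1 (fst s, (snd s)(fst s a := fst s b))"
  moreover have "exec (Store a b) s 1 (fst s, (snd s)(fst s a := fst s b))" using exec.Store[of a b "fst s" "snd s"] by simp
  ultimately show "wp (Store a b) Q s" unfolding wp_def by blast
qed

lemma wp_Seq[simp]: "wp (Seq c1 c2) Q s = wp c1 (\<lambda>t1 s1. wp c2 (\<lambda>t2 s2. Q (t1 + t2) s2) s1) s"
  unfolding wp_def by (blast elim: SeqE intro: exec.Seq)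

lemma wp_If[simp]: "wp (If r c1 c2) Q s =
   (if fst s r \<noteq> 0 then wp c1 (\<lambda>t. Q (t + 1)) s else wp c2 (\<lambda>t. Q (t + 1)) s)"
proof (cases "fst s r \<noteq> 0")
  case True
  have "wp (If r c1 c2) Q s = wp c1 (\<lambda>t. Q (t + 1)) s"
  proof
    assume "wp (If r c1 c2) Q s" then show "wp c1 (\<lambda>t. Q (t + 1)) s"
      unfolding wp_def using True by (force elim: IfE)
  next
    assume "wp c1 (\<lambda>t. Q (t + 1)) s" then show "wp (If r c1 c2) Q s"
      unfolding wp_def using True by (blast intro: exec.IfT)
  qed
  then show ?thesis using True by simp
next
  case False
  have "wp (If r c1 c2) Q s = wp c2 (\<lambda>t. Q (t + 1)) s"
  proof
    assume "wp (If r c1 c2) Q s" then show "wp c2 (\<lambda>t. Q (t + 1)) s"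
      unfolding wp_def using False by (force elim: IfE)
  next
    assume "wp c2 (\<lambda>t. Q (t + 1)) s" then show "wp (If r c1 c2) Q s"
      unfolding wp_def using False exec.IfF[of s r c2 _ _ c1] by blast
  qed
  then show ?thesis using False by simp
qed

lemma wp_While_F: "fst s r = 0 \<Longrightarrow> wp (While r c) Q s = Q 1 s"
proof
  assume "fst s r = 0" "wp (While r c) Q s" then show "Q 1 s" unfolding wp_def by (auto elim: WhileE)
next
  assume "fst s r = 0" "Q 1 s" with exec.WhileF[of s r c] show "wp (While r c) Q s" unfolding wp_def by blast
qed

lemma wp_mono: "wp c Q s \<Longrightarrow> (\<And>t s'. Q t s' \<Longrightarrow> Q' t s') \<Longrightarrow> wp c Q' s"
  unfolding wp_def by blast

lemma wp_seqI: "wp c1 P s \<Longrightarrow> (\<And>t1 s1. P t1 s1 \<Longrightarrow> wp c2 (\<lambda>t2 s2. Q (t1 + t2) s2) s1)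
   \<Longrightarrow> wp (Seq c1 c2) Q s"
  by (auto elim!: wp_mono)

lemma wp_While_T: "fst s r \<noteq> 0 \<Longrightarrow> wp c (\<lambda>t1 s1. wp (While r c) (\<lambda>t2 s2. Q (t1 + t2 + 1) s2) s1) s
   \<Longrightarrow> wp (While r c) Q s"
  unfolding wp_def by (blast intro: exec.WhileT)

lemma wp_While:
  assumes step: "\<And>s. I s \<Longrightarrow> fst s r \<noteq> 0 \<Longrightarrow> wp c (\<lambda>t s'. I s' \<and> \<mu> s' < \<mu> s \<and> t \<le> b) s"
    and "I s"
  shows "wp (While r c) (\<lambda>t s'. I s' \<and> fst s' r = 0 \<and> t \<le> (\<mu> s + 1) * (b + 1)) s"
  using assms(2)
proof (induction "\<mu> s" arbitrary: s rule: less_induct)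
  case less
  show ?case
  proof (cases "fst s r = 0")
    case True
    then show ?thesis using less.prems by (simp add: wp_While_F)
  next
    case False
    show ?thesis
    proof (rule wp_While_T[OF False])
      show "wp c (\<lambda>t1 s1. wp (While r c) (\<lambda>t2 s2. I s2 \<and> fst s2 r = 0 \<and> t1 + t2 + 1 \<le> (\<mu> s + 1) * (b + 1)) s1) s"
      proof (rule wp_mono[OF step[OF less.prems False]])
        fix t1 s1 assume h: "I s1 \<and> \<mu> s1 < \<mu> s \<and> t1 \<le> b"
        have "wp (While r c) (\<lambda>t s'. I s' \<and> fst s' r = 0 \<and> t \<le> (\<mu> s1 + 1) * (b + 1)) s1"
          using less.hyps h by blast
        then show "wp (While r c) (\<lambda>t2 s2. I s2 \<and> fst s2 r = 0 \<and> t1 + t2 + 1 \<le> (\<mu> s + 1) * (b + 1)) s1"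
        proof (rule wp_mono)
          fix t2 s2 assume "I s2 \<and> fst s2 r = 0 \<and> t2 \<le> (\<mu> s1 + 1) * (b + 1)"
          moreover have "(\<mu> s1 + 1) * (b + 1) + b + 1 \<le> (\<mu> s + 1) * (b + 1)"
          proof -
            have "\<mu> s1 + 1 + 1 \<le> \<mu> s + 1" using h by simp
            hence "(\<mu> s1 + 1 + 1) * (b + 1) \<le> (\<mu> s + 1) * (b + 1)" by (rule mult_right_mono) simp
            thus ?thesis by (simp add: algebra_simps)
          qed
          ultimately show "I s2 \<and> fst s2 r = 0 \<and> t1 + t2 + 1 \<le> (\<mu> s + 1) * (b + 1)"
            using h by linarith
        qed
      qed
    qed
  qed
qed



definition cpos :: "cnf \<Rightarrow> nat \<Rightarrow> nat" where
  "cpos phi ci = 4 + sum_list (map (\<lambda>C. 1 + 2 * length C) (take ci phi))"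

definition lsum :: "cnf \<Rightarrow> nat \<Rightarrow> nat" where
  "lsum phi ci = sum_list (map length (take ci phi))"

definition bcode :: "bool \<Rightarrow> nat" where "bcode b = (if b then 1 else 0)"

definition lits :: "cnf \<Rightarrow> (bool \<times> nat \<times> nat) list" where
  "lits phi = concat (map (\<lambda>i. map (\<lambda>(b,v). (b,v,i)) (phi!i)) [0..<length phi])"

lemma concat_nth_split:
  assumes "i < length xs" "q < length (xs!i)"
  shows "concat xs ! (sum_list (map length (take i xs)) + q) = xs!i!q"
  using assms
proof (induction xs arbitrary: i)
  case Nil then show ?case by simp
next
  case (Cons a xs)
  show ?case
  proof (cases i)
    case 0 then show ?thesis using Cons.prems by (simp add: nth_append)
  next
    case (Suc i')
    then show ?thesis using Cons by (simp add: nth_append add.assoc)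
  qed
qed

lemma cpos_Suc: "ci < length phi \<Longrightarrow> cpos phi (Suc ci) = cpos phi ci + 1 + 2 * length (phi!ci)"
  unfolding cpos_def by (simp add: take_Suc_conv_app_nth)

lemma lsum_Suc: "ci < length phi \<Longrightarrow> lsum phi (Suc ci) = lsum phi ci + length (phi!ci)"
  unfolding lsum_def by (simp add: take_Suc_conv_app_nth)

lemma length_encode_clause: "length (encode_clause C) = 1 + 2 * length C"
proof -
  have "length (concat (map (\<lambda>(b, v). [if b then 1 else 0, v]) C)) = 2 * length C"
    by (induction C) auto
  then show ?thesis unfolding encode_clause_def by simp
qed

lemma take_map_encode: "sum_list (map length (take ci (map encode_clause phi)))
   = sum_list (map (\<lambda>C. 1 + 2 * length C) (take ci phi))"
  by (simp add: take_map comp_def length_encode_clause)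

lemma length_encode: "length (encode n phi k p) = cpos phi (length phi)"
  unfolding encode_def cpos_def by (simp add: length_concat comp_def length_encode_clause)

lemma encode_clause_nth:
  assumes "q < length C"
  shows "encode_clause C ! (1 + 2*q) = bcode (fst (C!q)) \<and> encode_clause C ! (2 + 2*q) = snd (C!q)"
proof -
  let ?xs = "map (\<lambda>(b, v). [if b then 1 else 0, v]) C"
  have len: "\<And>i. i < length ?xs \<Longrightarrow> length (?xs!i) = 2" by (auto split: prod.splits)
  have sl: "sum_list (map length (take q ?xs)) = 2 * q"
  proof -
    have "map length (take q ?xs) = replicate q 2" using assms
      by (auto intro!: nth_equalityI simp: split: prod.splits)
    then show ?thesis by (simp add: sum_list_replicate)
  qed
  obtain b v where bv: "C!q = (b,v)" by fastforce
  have xq: "?xs!q = [if b then 1 else 0, v]" using assms bv by simp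
  have e0: "concat ?xs ! (2*q) = (if b then 1 else 0)"
    using concat_nth_split[of q ?xs 0] assms sl xq by simp
  have e1: "concat ?xs ! (Suc (2*q)) = v"
    using concat_nth_split[of q ?xs 1] assms sl xq by simp
  show ?thesis unfolding encode_clause_def using e0 e1 bv by (simp add: bcode_def)
qed

lemma encode_nth_clause:
  assumes "ci < length phi" "j < length (encode_clause (phi!ci))"
  shows "encode n phi k p ! (cpos phi ci + j) = encode_clause (phi!ci) ! j"
proof -
  have "concat (map encode_clause phi) ! (sum_list (map length (take ci (map encode_clause phi))) + j)
      = encode_clause (phi!ci) ! j"
    using concat_nth_split[of ci "map encode_clause phi" j] assms by simp
  then show ?thesis unfolding encode_def cpos_def take_map_encode[symmetric]
    by (simp add: nth_append)
qed

lemma enc_len_cl: "ci < length phi \<Longrightarrow> encode n phi k p ! cpos phi ci = length (phi!ci)"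
  using encode_nth_clause[of ci phi 0] by (simp add: length_encode_clause encode_clause_def)

lemma enc_lit: "ci < length phi \<Longrightarrow> q < length (phi!ci) \<Longrightarrow>
   encode n phi k p ! (cpos phi ci + 1 + 2*q) = bcode (fst (phi!ci!q)) \<and>
   encode n phi k p ! (cpos phi ci + 2 + 2*q) = snd (phi!ci!q)"
  using encode_nth_clause[of ci phi "1 + 2*q" n k p] encode_nth_clause[of ci phi "2 + 2*q" n k p]
    encode_clause_nth[of q "phi!ci"] by (simp add: length_encode_clause add.assoc)

lemma cpos_mono: "ci \<le> cj \<Longrightarrow> cpos phi ci \<le> cpos phi cj"
proof (induction cj)
  case 0 then show ?case by simp
next
  case (Suc cj)
  then show ?case
  proof (cases "ci = Suc cj")
    case False
    then have "cpos phi ci \<le> cpos phi cj" using Suc by simp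
    moreover have "cpos phi cj \<le> cpos phi (Suc cj)"
      unfolding cpos_def by (cases "cj < length phi") (auto simp: take_Suc_conv_app_nth)
    ultimately show ?thesis by simp
  qed simp
qed

lemma enc_head: "encode n phi k p ! 0 = n" "encode n phi k p ! 1 = k"
  "encode n phi k p ! 2 = p" "encode n phi k p ! 3 = length phi"
  by (simp_all add: encode_def)

lemma length_lits: "length (lits phi) = lsum phi (length phi)"
proof -
  have "map (\<lambda>x. length (phi ! x)) [0..<length phi] = map length phi"
    by (rule nth_equalityI) auto
  then show ?thesis unfolding lits_def lsum_def by (simp add: length_concat comp_def)
qed

lemma lits_nth:
  assumes "ci < length phi" "q < length (phi!ci)"
  shows "lits phi ! (lsum phi ci + q) = (fst (phi!ci!q), snd (phi!ci!q), ci)"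
proof -
  let ?xs = "map (\<lambda>i. map (\<lambda>(b,v). (b,v,i)) (phi!i)) [0..<length phi]"
  have "map length (take ci ?xs) = map length (take ci phi)"
    using assms by (auto intro!: nth_equalityI)
  then have "lsum phi ci = sum_list (map length (take ci ?xs))" unfolding lsum_def by simp
  then show ?thesis unfolding lits_def using concat_nth_split[of ci ?xs q] assms
    by (auto split: prod.splits)
qed

lemma set_lits: "x \<in> set (lits phi) \<longleftrightarrow> (case x of (b,v,i) \<Rightarrow> i < length phi \<and> (b,v) \<in> set (phi!i))"
  unfolding lits_def by (cases x) auto

lemma lsum_le: "ci \<le> length phi \<Longrightarrow> lsum phi ci \<le> lsum phi (length phi)"
proof -
  have "sum_list (map length phi) = sum_list (map length (take ci phi)) + sum_list (map length (drop ci phi))"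
    by (metis append_take_drop_id map_append sum_list_append)
  then show ?thesis unfolding lsum_def by (simp del: sum_list_append)
qed

lemma lsum_cpos: "lsum phi ci \<le> cpos phi ci"
proof -
  have "(\<Sum>C\<leftarrow>take ci phi. length C) \<le> (\<Sum>C\<leftarrow>take ci phi. 1 + 2 * length C)"
    by (rule sum_list_mono) simp
  then show ?thesis unfolding lsum_def cpos_def by simp
qed



definition walk :: "com \<Rightarrow> com" where
 "walk body = While 6 (Seq (Load 7 5) (Seq (Add 5 5 1) (Seq (While 7 (Seq body (Seq (Add 5 5 1)
    (Seq (Add 5 5 1) (Sub 7 7 1))))) (Seq (Add 12 12 1) (Sub 6 6 1)))))"

definition agree :: "nat list \<Rightarrow> (nat \<Rightarrow> nat) \<Rightarrow> bool" where
  "agree xs M \<longleftrightarrow> (\<forall>a<length xs. M a = xs!a)"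

lemma wp_Load_seq: "wp c (\<lambda>t. Q (1 + t)) ((fst s)(r := snd s (fst s a)), snd s) \<Longrightarrow> wp (Seq (Load r a) c) Q s"
  by simp
lemma wp_Add_seq: "wp c (\<lambda>t. Q (1 + t)) ((fst s)(r := fst s a + fst s b), snd s) \<Longrightarrow> wp (Seq (Add r a b) c) Q s"
  by simp
lemma wp_Sub_seq: "wp c (\<lambda>t. Q (1 + t)) ((fst s)(r := fst s a - fst s b), snd s) \<Longrightarrow> wp (Seq (Sub r a b) c) Q s"
  by simp
lemma wp_Const_seq: "wp c (\<lambda>t. Q (1 + t)) ((fst s)(r := v), snd s) \<Longrightarrow> wp (Seq (Const r v) c) Q s"
  by simp
lemma wp_Store_seq: "wp c (\<lambda>t. Q (1 + t)) (fst s, (snd s)(fst s a := fst s b)) \<Longrightarrow> wp (Seq (Store a b) c) Q s"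
  by simp

lemma m_le_N: "length phi \<le> length (encode n phi k p)"
proof -
  have "length xs \<le> sum_list (map (\<lambda>C. 1 + 2 * length C) xs)" for xs :: cnf
    by (induction xs) auto
  from this[of phi] show ?thesis unfolding length_encode cpos_def by simp
qed

lemma length_phi_le: "ci < length phi \<Longrightarrow> length (phi!ci) \<le> length (encode n phi k p)"
proof -
  assume ci: "ci < length phi"
  have "cpos phi (Suc ci) \<le> cpos phi (length phi)" using ci by (intro cpos_mono) simp
  then show ?thesis using cpos_Suc[OF ci] length_encode[of n phi k p] by simp
qed

lemma walk_spec:
  fixes I :: "nat \<Rightarrow> state \<Rightarrow> bool" and bb n k p :: nat and phi :: cnf
  defines "enc \<equiv> encode n phi k p"
  assumes body: "\<And>ci q R M. ci < length phi \<Longrightarrow> q < length (phi!ci) \<Longrightarrow> I (lsum phi ci + q) (R,M) \<Longrightarrow>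
      R 5 = cpos phi ci + 1 + 2*q \<Longrightarrow> R 12 = ci \<Longrightarrow> R 1 = 1 \<Longrightarrow> agree enc M \<Longrightarrow>
      wp body (\<lambda>t s'. I (lsum phi ci + q + 1) s' \<and> fst s' 5 = R 5 \<and> fst s' 6 = R 6 \<and> fst s' 7 = R 7
          \<and> fst s' 12 = R 12 \<and> fst s' 1 = 1 \<and> agree enc (snd s') \<and> t \<le> bb) (R,M)"
    and stable: "\<And>j R R' M. I j (R,M) \<Longrightarrow> (\<forall>r. r \<notin> {5,6,7,12} \<longrightarrow> R' r = R r) \<Longrightarrow> I j (R',M)"
    and start: "I 0 (R,M)" "R 5 = 4" "R 6 = length phi" "R 12 = 0" "R 1 = 1" "agree enc M"
  shows "wp (walk body) (\<lambda>t s'. I (length (lits phi)) s' \<and> fst s' 5 = length enc \<and> fst s' 1 = 1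
      \<and> agree enc (snd s') \<and> t \<le> (length enc + 1) * ((length enc + 1) * (bb + 4) + 5)) (R,M)"
proof -
  let ?m = "length phi"
  let ?N = "length enc"
  define OI where "OI s \<longleftrightarrow> (\<exists>ci \<le> ?m. fst s 12 = ci \<and> fst s 6 = ?m - ci \<and> fst s 5 = cpos phi ci
      \<and> fst s 1 = 1 \<and> agree enc (snd s) \<and> I (lsum phi ci) s)" for s
  have stable': "I j s'" if "I j s" "\<forall>r. r \<notin> {5,6,7,12} \<longrightarrow> fst s' r = fst s r" "snd s' = snd s" for j s s'
    using stable[of j "fst s" "snd s" "fst s'"] that by (cases s, cases s') auto
  have outer: "wp (Seq (Load 7 5) (Seq (Add 5 5 1) (Seq (While 7 (Seq body (Seq (Add 5 5 1)
    (Seq (Add 5 5 1) (Sub 7 7 1))))) (Seq (Add 12 12 1) (Sub 6 6 1)))))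
      (\<lambda>t s'. OI s' \<and> fst s' 6 < fst s 6 \<and> t \<le> (?N + 1) * (bb + 4) + 4) s"
    if "OI s" "fst s 6 \<noteq> 0" for s
  proof -
    from that obtain ci where ci: "ci \<le> ?m" "fst s 12 = ci" "fst s 6 = ?m - ci" "fst s 5 = cpos phi ci"
      "fst s 1 = 1" "agree enc (snd s)" "I (lsum phi ci) s" unfolding OI_def by blast
    have cim: "ci < ?m" using ci that(2) by simp
    let ?l = "length (phi!ci)"
    have Ml: "snd s (cpos phi ci) = ?l"
    proof -
      have "cpos phi ci < cpos phi (Suc ci)" using cpos_Suc[OF cim] by simp
      also have "\<dots> \<le> ?N" unfolding enc_def length_encode using cim by (intro cpos_mono) simp
      finally show ?thesis using ci(6) enc_len_cl[OF cim] unfolding agree_def enc_def by simp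
    qed
    define II where "II s' \<longleftrightarrow> (\<exists>q \<le> ?l. fst s' 7 = ?l - q \<and> fst s' 5 = cpos phi ci + 1 + 2*q
       \<and> fst s' 12 = ci \<and> fst s' 6 = ?m - ci \<and> fst s' 1 = 1 \<and> agree enc (snd s') \<and> I (lsum phi ci + q) s')"
      for s'
    have inner: "wp (Seq body (Seq (Add 5 5 1) (Seq (Add 5 5 1) (Sub 7 7 1))))
       (\<lambda>t s'. II s' \<and> fst s' 7 < fst s1 7 \<and> t \<le> bb + 3) s1" if "II s1" "fst s1 7 \<noteq> 0" for s1
    proof -
      from that obtain q where q: "q \<le> ?l" "fst s1 7 = ?l - q" "fst s1 5 = cpos phi ci + 1 + 2*q"
       "fst s1 12 = ci" "fst s1 6 = ?m - ci" "fst s1 1 = 1" "agree enc (snd s1)" "I (lsum phi ci + q) s1"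
        unfolding II_def by blast
      have ql: "q < ?l" using q that(2) by simp
      show ?thesis
      proof (rule wp_seqI)
        show "wp body (\<lambda>t s'. I (lsum phi ci + q + 1) s' \<and> fst s' 5 = fst s1 5 \<and> fst s' 6 = fst s1 6 \<and> fst s' 7 = fst s1 7
          \<and> fst s' 12 = fst s1 12 \<and> fst s' 1 = 1 \<and> agree enc (snd s') \<and> t \<le> bb) s1"
          using body[OF cim ql, of "fst s1" "snd s1"] q by simp
      next
        fix t1 s2 assume h: "I (lsum phi ci + q + 1) s2 \<and> fst s2 5 = fst s1 5 \<and> fst s2 6 = fst s1 6 \<and> fst s2 7 = fst s1 7
          \<and> fst s2 12 = fst s1 12 \<and> fst s2 1 = 1 \<and> agree enc (snd s2) \<and> t1 \<le> bb"
        let ?s3 = "((fst s2)(5 := fst s2 5 + 1 + 1, 7 := fst s2 7 - 1), snd s2)"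
        have "I (lsum phi ci + q + 1) s2" using h by simp
        then have "I (lsum phi ci + q + 1) ?s3" by (rule stable') auto
        then have "I (lsum phi ci + Suc q) ?s3" by simp
        moreover have "fst ?s3 7 = ?l - Suc q" "fst ?s3 5 = cpos phi ci + 1 + 2 * Suc q"
          using h q by auto
        ultimately have "II ?s3" unfolding II_def using h q ql by (intro exI[of _ "Suc q"]) auto
        then show "wp (Seq (Add 5 5 1) (Seq (Add 5 5 1) (Sub 7 7 1)))
            (\<lambda>t2 s2. II s2 \<and> fst s2 7 < fst s1 7 \<and> t1 + t2 \<le> bb + 3) s2"
          using h q ql by (simp add: fun_upd_twist)
      qed
    qed
    have Wl: "wp (While 7 (Seq body (Seq (Add 5 5 1) (Seq (Add 5 5 1) (Sub 7 7 1)))))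
          (\<lambda>t s'. II s' \<and> fst s' 7 = 0 \<and> t \<le> (?l + 1) * (bb + 4)) s1" if "II s1" for s1
    proof -
      have W: "wp (While 7 (Seq body (Seq (Add 5 5 1) (Seq (Add 5 5 1) (Sub 7 7 1)))))
          (\<lambda>t s'. II s' \<and> fst s' 7 = 0 \<and> t \<le> (fst s1 7 + 1) * (bb + 3 + 1)) s1"
        by (rule wp_While[where \<mu> = "\<lambda>s. fst s 7"]) (rule inner, assumption+, rule that)
      have "fst s1 7 \<le> ?l" using that unfolding II_def by auto
      then have "(fst s1 7 + 1) * (bb + 4) \<le> (?l + 1) * (bb + 4)" by (intro mult_right_mono) auto
      moreover have e: "bb + 3 + 1 = bb + 4" by simp
      ultimately have "(fst s1 7 + 1) * (bb + 3 + 1) \<le> (?l + 1) * (bb + 4)" by (simp only: e)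
      then show ?thesis by (rule_tac wp_mono[OF W]) auto
    qed
    have I0: "I (lsum phi ci) ((fst s)(7 := snd s (fst s 5), 5 := fst s 5 + fst s 1), snd s)"
      using ci(7) by (rule stable') auto
    show ?thesis
    proof (rule wp_Load_seq, rule wp_Add_seq, rule wp_seqI[OF Wl])
      show "II ((fst ((fst s)(7 := snd s (fst s 5)), snd s))(5 := fst ((fst s)(7 := snd s (fst s 5)), snd s) 5 + fst ((fst s)(7 := snd s (fst s 5)), snd s) 1),
         snd ((fst s)(7 := snd s (fst s 5)), snd s))"
        unfolding II_def using ci Ml I0 by (intro exI[of _ 0]) auto
    next
      fix t1 s2 assume h: "II s2 \<and> fst s2 7 = 0 \<and> t1 \<le> (?l + 1) * (bb + 4)"
      then obtain q where q: "q \<le> ?l" "fst s2 7 = ?l - q" "fst s2 5 = cpos phi ci + 1 + 2*q"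
       "fst s2 12 = ci" "fst s2 6 = ?m - ci" "fst s2 1 = 1" "agree enc (snd s2)" "I (lsum phi ci + q) s2"
        unfolding II_def by blast
      have qq: "q = ?l" using q h by simp
      have t1: "t1 \<le> (?l + 1) * (bb + 4)" using h by simp
      have lN: "?l \<le> ?N" unfolding enc_def by (rule length_phi_le[OF cim])
      have "(?l + 1) * (bb + 4) \<le> (?N + 1) * (bb + 4)" using lN by (intro mult_right_mono) auto
      hence t1': "t1 \<le> (?N + 1) * (bb + 4)" using t1 by linarith
      let ?s3 = "((fst s2)(12 := fst s2 12 + 1, 6 := fst s2 6 - 1), snd s2)"
      have "I (lsum phi ci + q) ?s3" using q(8) by (rule stable') auto
      then have "I (lsum phi (Suc ci)) ?s3" using qq cim by (simp add: lsum_Suc)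
      then have "OI ?s3" unfolding OI_def using q qq cim
        by (intro exI[of _ "Suc ci"]) (auto simp: cpos_Suc)
      then show "wp (Seq (Add 12 12 1) (Sub 6 6 1))
         (\<lambda>t2 s2a. (\<lambda>t. (\<lambda>t. (\<lambda>t s'. OI s' \<and> fst s' 6 < fst s 6 \<and> t \<le> (?N + 1) * (bb + 4) + 4) (1 + t)) (1 + t)) (t1 + t2) s2a) s2"
        using q t1' ci cim by (simp add: fun_upd_twist)
    qed
  qed
  have OI0: "OI (R,M)" unfolding OI_def using start by (intro exI[of _ 0]) (auto simp: cpos_def lsum_def)
  have W: "wp (walk body) (\<lambda>t s'. OI s' \<and> fst s' 6 = 0 \<and> t \<le> (fst (R,M) 6 + 1) * ((?N + 1) * (bb + 4) + 4 + 1)) (R,M)"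
    unfolding walk_def by (rule wp_While[where r = 6 and \<mu> = "\<lambda>s. fst s 6"]) (rule outer, assumption+, rule OI0)
  show ?thesis
  proof (rule wp_mono[OF W])
    fix t s' assume h: "OI s' \<and> fst s' 6 = 0 \<and> t \<le> (fst (R,M) 6 + 1) * ((?N + 1) * (bb + 4) + 4 + 1)"
    then obtain ci where ci: "ci \<le> ?m" "fst s' 12 = ci" "fst s' 6 = ?m - ci" "fst s' 5 = cpos phi ci"
      "fst s' 1 = 1" "agree enc (snd s')" "I (lsum phi ci) s'" unfolding OI_def by blast
    have cm: "ci = ?m" using ci h by simp
    have mN: "?m \<le> ?N" unfolding enc_def by (rule m_le_N)
    have "(?m + 1) * ((?N + 1) * (bb + 4) + 5) \<le> (?N + 1) * ((?N + 1) * (bb + 4) + 5)"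
      using mN by (intro mult_right_mono) auto
    moreover have e: "(fst (R,M) 6 + 1) * ((?N + 1) * (bb + 4) + 4 + 1) = (?m + 1) * ((?N + 1) * (bb + 4) + 5)"
      using start by simp
    ultimately have "t \<le> (?N + 1) * ((?N + 1) * (bb + 4) + 5)" using h by linarith
    then show "I (length (lits phi)) s' \<and> fst s' 5 = ?N \<and> fst s' 1 = 1 \<and> agree enc (snd s')
       \<and> t \<le> (?N + 1) * ((?N + 1) * (bb + 4) + 5)"
      using ci cm by (simp add: length_lits enc_def length_encode)
  qed
qed



definition init :: com where
  "init = Seq (Const 1 1) (Seq (Const 9 1) (Seq (Load 2 9) (Seq (Const 9 2) (Seq (Load 3 9)
     (Seq (Const 9 3) (Seq (Load 4 9) (Seq (Const 5 4) (Seq (Add 6 4 13) (Seq (Const 12 0) (Const 8 0))))))))))"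

definition body1 :: com where "body1 = Add 8 8 1"

definition mid :: com where
  "mid = Seq (Add 10 5 13) (Seq (Add 11 5 13) (Seq (Const 5 4) (Seq (Add 6 4 13) (Const 12 0))))"

definition body2 :: com where
  "body2 = Seq (Load 9 5) (Seq (Store 11 9) (Seq (Add 11 11 1) (Seq (Add 14 5 1) (Seq (Load 9 14)
     (Seq (Store 11 9) (Seq (Add 11 11 1) (Seq (Store 11 12) (Add 11 11 1))))))))"

lemma mid_spec: "fst s 13 = 0 \<Longrightarrow> wp mid (\<lambda>t s'. s' = ((fst s)(10 := fst s 5, 11 := fst s 5, 5 := 4, 6 := fst s 4, 12 := 0), snd s) \<and> t = 5) s"
  by (simp add: mid_def)

definition phase12 :: com where
  "phase12 = Seq init (Seq (walk body1) (Seq mid (walk body2)))"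

definition arrOK :: "cnf \<Rightarrow> nat \<Rightarrow> nat \<Rightarrow> (nat \<Rightarrow> nat) \<Rightarrow> bool" where
  "arrOK phi N j M \<longleftrightarrow> (\<forall>j' < j. M (N + 3*j') = bcode (fst (lits phi ! j'))
      \<and> M (N + 3*j' + 1) = fst (snd (lits phi ! j')) \<and> M (N + 3*j' + 2) = snd (snd (lits phi ! j')))"

lemma wp_pair: "wp c Q (fst s, snd s) \<Longrightarrow> wp c Q s" by simp

lemma phase12_spec:
  fixes n k p :: nat and phi :: cnf
  defines "enc \<equiv> encode n phi k p"
  shows "wp phase12 (\<lambda>t s'. fst s' 8 = length (lits phi) \<and> fst s' 10 = length enc
     \<and> fst s' 11 = length enc + 3 * length (lits phi) \<and> fst s' 1 = 1 \<and> fst s' 2 = k \<and> fst s' 3 = p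
     \<and> fst s' 4 = length phi \<and> fst s' 13 = 0 \<and> fst s' 0 = 0
     \<and> arrOK phi (length enc) (length (lits phi)) (snd s')
     \<and> t \<le> 2 * ((length enc + 1) * ((length enc + 1) * 13 + 5)) + 20) (init_state enc)"
proof -
  let ?N = "length enc"
  let ?L = "length (lits phi)"
  let ?m = "length phi"
  have ag0: "agree enc (snd (init_state enc))" unfolding agree_def init_state_def by simp
  have Nge4: "4 \<le> ?N" unfolding enc_def encode_def by simp
  define I1 where "I1 j s \<longleftrightarrow> fst s 8 = j \<and> fst s 2 = k \<and> fst s 3 = p \<and> fst s 4 = ?m \<and> fst s 13 = 0
     \<and> fst s 0 = 0" for j and s :: state
  have init: "wp init (\<lambda>t s'. fst s' 1 = 1 \<and> fst s' 2 = k \<and> fst s' 3 = p \<and> fst s' 4 = ?m \<and> fst s' 5 = 4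
     \<and> fst s' 6 = ?m \<and> fst s' 12 = 0 \<and> fst s' 8 = 0 \<and> fst s' 0 = 0 \<and> fst s' 13 = 0
     \<and> snd s' = snd (init_state enc) \<and> t = 11) (init_state enc)"
  proof -
    have eh: "enc ! Suc 0 = k" "enc ! 2 = p" "enc ! 3 = ?m" unfolding enc_def encode_def by simp_all
    show ?thesis unfolding init_def init_state_def using Nge4 eh by simp
  qed
  have w1: "wp (walk body1) (\<lambda>t s'. I1 ?L s' \<and> fst s' 5 = ?N \<and> fst s' 1 = 1
      \<and> agree enc (snd s') \<and> t \<le> (?N + 1) * ((?N + 1) * (1 + 4) + 5)) (R1, M1)"
    if "I1 0 (R1, M1)" "R1 5 = 4" "R1 6 = ?m" "R1 12 = 0" "R1 1 = 1" "agree enc M1" for R1 M1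
    unfolding enc_def
  proof (rule walk_spec)
    fix ci q R M assume "I1 (lsum phi ci + q) (R, M)" "R 1 = 1" "agree (encode n phi k p) M"
      "R 5 = cpos phi ci + 1 + 2 * q" "R 12 = ci"
    then show "wp body1 (\<lambda>t s'. I1 (lsum phi ci + q + 1) s' \<and> fst s' 5 = R 5 \<and> fst s' 6 = R 6 \<and> fst s' 7 = R 7
          \<and> fst s' 12 = R 12 \<and> fst s' 1 = 1 \<and> agree (encode n phi k p) (snd s') \<and> t \<le> 1) (R, M)"
      unfolding body1_def I1_def by simp
  next
    fix j R R' M assume "I1 j (R, M)" "\<forall>r. r \<notin> {5, 6, 7, 12} \<longrightarrow> R' r = R r"
    then show "I1 j (R', M)" unfolding I1_def by simp
  qed (use that in \<open>auto simp: enc_def\<close>)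
  define I2 where "I2 j s \<longleftrightarrow> fst s 8 = ?L \<and> fst s 2 = k \<and> fst s 3 = p \<and> fst s 4 = ?m \<and> fst s 13 = 0
     \<and> fst s 0 = 0 \<and> fst s 10 = ?N \<and> fst s 11 = ?N + 3 * j \<and> arrOK phi ?N j (snd s)" for j and s :: state
  have w2: "wp (walk body2) (\<lambda>t s'. I2 ?L s' \<and> fst s' 5 = ?N \<and> fst s' 1 = 1
      \<and> agree enc (snd s') \<and> t \<le> (?N + 1) * ((?N + 1) * (9 + 4) + 5)) (R2, M2)"
    if "I2 0 (R2, M2)" "R2 5 = 4" "R2 6 = ?m" "R2 12 = 0" "R2 1 = 1" "agree enc M2" for R2 M2
    unfolding enc_def
  proof (rule walk_spec)
    fix ci q R M assume a: "I2 (lsum phi ci + q) (R, M)" "R 1 = 1" "agree (encode n phi k p) M"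
      "R 5 = cpos phi ci + 1 + 2 * q" "R 12 = ci" "ci < length phi" "q < length (phi ! ci)"
    let ?j = "lsum phi ci + q"
    have lt: "cpos phi ci + 2 + 2 * q < ?N"
    proof -
      have "cpos phi ci + 2 + 2 * q < cpos phi (Suc ci)" using a cpos_Suc[of ci phi] by simp
      also have "\<dots> \<le> ?N" unfolding enc_def length_encode using a by (intro cpos_mono) simp
      finally show ?thesis .
    qed
    have mem: "M (R 5) = bcode (fst (phi!ci!q))" "M (R 5 + 1) = snd (phi!ci!q)"
      using a enc_lit[of ci phi q n k p] lt unfolding agree_def enc_def by (auto simp: add.commute add.left_commute)
    have lj: "lits phi ! ?j = (fst (phi!ci!q), snd (phi!ci!q), ci)" using lits_nth a by blast
    have "arrOK phi ?N ?j M" "R 11 = ?N + 3 * ?j" using a unfolding I2_def by auto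
    then have arr: "arrOK phi ?N (?j + 1) (M(R 11 := bcode (fst (phi!ci!q)), R 11 + 1 := snd (phi!ci!q), R 11 + 1 + 1 := ci))"
      unfolding arrOK_def using lj by (auto simp: less_Suc_eq)
    have agr: "agree (encode n phi k p) (M(R 11 := x, R 11 + 1 := y, R 11 + 1 + 1 := z))" for x y z
      using a unfolding agree_def I2_def enc_def by auto
    show "wp body2 (\<lambda>t s'. I2 (lsum phi ci + q + 1) s' \<and> fst s' 5 = R 5 \<and> fst s' 6 = R 6 \<and> fst s' 7 = R 7
          \<and> fst s' 12 = R 12 \<and> fst s' 1 = 1 \<and> agree (encode n phi k p) (snd s') \<and> t \<le> 9) (R, M)"
    proof -
      have R11: "R 11 = ?N + 3 * ?j" using a unfolding I2_def by simp
      have ne: "R 5 + 1 \<noteq> R 11" using R11 lt a(4) by simp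
      have I2': "I2 (?j + 1) (R', M(R 11 := bcode (fst (phi!ci!q)), R 11 + 1 := snd (phi!ci!q), R 11 + 1 + 1 := ci))"
        if "R' 11 = R 11 + 3" "\<forall>r\<in>{2,3,4,13,0,10,8}. R' r = R r" for R'
        using a(1) arr that unfolding I2_def by simp
      show ?thesis
        unfolding body2_def
        apply (simp only: wp_Seq wp_Load wp_Store wp_Add fst_conv snd_conv fun_upd_same fun_upd_other)
        apply (simp only: a(2) a(5) ne mem fun_upd_other fun_upd_same not_False_eq_True)
        apply (intro conjI)
        apply (rule I2')
        apply simp
        apply simp
        using agr apply simp_all
        done
    qed
  next
    fix j R R' M assume "I2 j (R, M)" "\<forall>r. r \<notin> {5, 6, 7, 12} \<longrightarrow> R' r = R r"
    then show "I2 j (R', M)" unfolding I2_def by simp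
  qed (use that in \<open>auto simp: enc_def\<close>)
  have a1: "(?N + 1) * ((?N + 1) * (1 + 4) + 5) \<le> (?N + 1) * ((?N + 1) * 13 + 5)"
    by (intro mult_left_mono) auto
  have a2: "(?N + 1) * ((?N + 1) * (9 + 4) + 5) = (?N + 1) * ((?N + 1) * 13 + 5)"
    by simp
  show ?thesis
    unfolding phase12_def
    apply (rule wp_seqI[OF init])
    apply (rule wp_seqI)
    apply (rule wp_pair)
    apply (rule w1)
    using ag0 apply (simp_all add: I1_def)[6]
    apply (rule wp_seqI[OF mid_spec])
     apply (simp add: I1_def)
    apply (elim conjE, hypsubst)
    apply (rule wp_mono[OF w2])
    apply (simp_all add: I1_def I2_def arrOK_def)
    apply (simp add: algebra_simps)
    done
qed



definition bs :: "nat \<Rightarrow> nat set" where "bs U = {i. bit U i}"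

lemma bit_lt: "(x::nat) < 2^i \<Longrightarrow> bit x j \<Longrightarrow> j < i"
  by (metis bit_take_bit_iff take_bit_nat_eq_self_iff)

lemma bs_sub: "U < 2^m \<Longrightarrow> bs U \<subseteq> {..<m}"
  unfolding bs_def using bit_lt by auto

lemma bs_inj: "bs U = bs V \<Longrightarrow> U = V"
  unfolding bs_def by (rule bit_eqI) blast

lemma bs_add: "(x::nat) < 2^i \<Longrightarrow> bs (x + 2^i) = insert i (bs x)"
  unfolding bs_def by (subst disjunctive_add) (auto simp: bit_simps dest: bit_lt)

lemma bs_notin: "(x::nat) < 2^i \<Longrightarrow> i \<notin> bs x"
  unfolding bs_def using bit_lt by blast

lemma bs_0[simp]: "bs 0 = {}" unfolding bs_def by simp

lemma bs_surj: "T \<subseteq> {..<m} \<Longrightarrow> \<exists>U<2^m. bs U = T"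
proof (induction m arbitrary: T)
  case 0 then show ?case by (intro exI[of _ 0]) auto
next
  case (Suc m)
  have "T - {m} \<subseteq> {..<m}" using Suc.prems by auto
  then obtain U where U: "U < 2^m" "bs U = T - {m}" using Suc.IH by blast
  show ?case
  proof (cases "m \<in> T")
    case True
    have "bs (U + 2^m) = T" using bs_add[OF U(1)] U True by auto
    moreover have "U + 2^m < 2^Suc m" using U by simp
    ultimately show ?thesis by blast
  next
    case False
    then show ?thesis using U by (intro exI[of _ U]) auto
  qed
qed

lemma unset_add: "bit (U::nat) i \<Longrightarrow> unset_bit i U + 2^i = U"
proof -
  assume h: "bit U i"
  have "unset_bit i U + 2^i = or (unset_bit i U) (2^i)"
    by (rule disjunctive_add) (auto simp: bit_simps)
  also have "\<dots> = U" by (rule bit_eqI) (auto simp: bit_simps h)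
  finally show ?thesis .
qed

lemma bs_sub_pow: "bit (U::nat) i \<Longrightarrow> bs (U - 2^i) = bs U - {i} \<and> 2^i \<le> U"
proof -
  assume h: "bit U i"
  have e: "U - 2^i = unset_bit i U" using unset_add[OF h] by linarith
  show ?thesis using unset_add[OF h] unfolding e bs_def by (auto simp: bit_simps)
qed

lemma bit_le: "(x::nat) < 2^(Suc i) \<Longrightarrow> bit x i \<longleftrightarrow> 2^i \<le> x"
proof -
  assume "x < 2^(Suc i)"
  hence "x div 2^i < 2" by (simp add: less_mult_imp_div_less)
  moreover have "x < 2^i \<Longrightarrow> x div 2^i = 0" by simp
  moreover have "2^i \<le> x \<Longrightarrow> x div 2^i \<ge> 1" by (simp add: Suc_le_eq div_greater_zero_iff)
  ultimately show ?thesis unfolding bit_iff_odd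
    by (metis One_nat_def even_zero le_less_Suc_eq linorder_not_le numeral_2_eq_2 odd_one)
qed

lemma bit_mod: "bit (U::nat) i \<longleftrightarrow> bit (U mod 2^(Suc i)) i"
proof -
  have "U mod 2^Suc i = take_bit (Suc i) U" by (simp only: take_bit_eq_mod)
  thus ?thesis by (simp add: bit_take_bit_iff)
qed

lemma bit_iff_mod: "bit (U::nat) i \<longleftrightarrow> 2^i \<le> U mod 2^(Suc i)"
  using bit_mod[of U i] bit_le[of "U mod 2^Suc i" i] by simp

lemma force_char:
  assumes "U < 2^m" "i < m"
  shows "(\<exists>T<2^m. bs T \<union> {i} = bs U \<and> G T \<le> c) \<longleftrightarrow> (bit U i \<and> (G U \<le> c \<or> G (U - 2^i) \<le> c))"
proof
  assume "\<exists>T<2^m. bs T \<union> {i} = bs U \<and> G T \<le> c"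
  then obtain T where T: "T < 2^m" "bs T \<union> {i} = bs U" "G T \<le> c" by blast
  have bi: "bit U i" using T(2) unfolding bs_def by auto
  have sp: "bs (U - 2^i) = bs U - {i}" using bs_sub_pow[OF bi] by simp
  have "bs T = bs U \<or> bs T = bs U - {i}" using T(2) by blast
  then have "T = U \<or> T = U - 2^i"
  proof
    assume "bs T = bs U" then show ?thesis using bs_inj by blast
  next
    assume "bs T = bs U - {i}" then have "bs T = bs (U - 2^i)" using sp by simp
    then show ?thesis using bs_inj by blast
  qed
  then show "bit U i \<and> (G U \<le> c \<or> G (U - 2^i) \<le> c)" using bi T(3) by blast
next
  assume h: "bit U i \<and> (G U \<le> c \<or> G (U - 2^i) \<le> c)"
  then have iu: "i \<in> bs U" unfolding bs_def by simp
  have sp: "bs (U - 2^i) = bs U - {i}" using bs_sub_pow h by blast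
  have lt: "U - 2^i < 2^m" using assms(1) by linarith
  have e1: "bs U \<union> {i} = bs U" using iu by blast
  have e2: "bs (U - 2^i) \<union> {i} = bs U" using iu sp by blast
  show "\<exists>T<2^m. bs T \<union> {i} = bs U \<and> G T \<le> c"
    using h assms(1) lt e1 e2 by blast
qed

section \<open>DP semantics\<close>

definition satW :: "cnf \<Rightarrow> nat set \<Rightarrow> nat set \<Rightarrow> nat set" where
  "satW phi W S = {i. i < length phi \<and> (\<exists>(b,v)\<in>set(phi!i). v \<in> W \<and> (v \<in> S) = b)}"

definition QQ :: "cnf \<Rightarrow> nat set \<Rightarrow> nat \<Rightarrow> nat set \<Rightarrow> bool" where
  "QQ phi W c T \<longleftrightarrow> (\<exists>S\<subseteq>W. card S \<le> c \<and> satW phi W S = T)"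

definition PosS :: "cnf \<Rightarrow> nat \<Rightarrow> bool \<Rightarrow> nat set" where
  "PosS phi v b = {i. i < length phi \<and> (b,v) \<in> set(phi!i)}"

lemma satW_sub: "satW phi W S \<subseteq> {..<length phi}" unfolding satW_def by auto
lemma PosS_sub: "PosS phi v b \<subseteq> {..<length phi}" unfolding PosS_def by auto

lemma satW_insert: "satW phi (insert v W) S = satW phi W S \<union> PosS phi v (v \<in> S)"
  unfolding satW_def PosS_def by auto

lemma satW_cong: "S \<inter> W = S' \<inter> W \<Longrightarrow> satW phi W S = satW phi W S'"
  unfolding satW_def by blast

lemma dp_step:
  assumes "finite W" "v \<notin> W"
  shows "QQ phi (insert v W) c U \<longleftrightarrow> (\<exists>T. QQ phi W c T \<and> T \<union> PosS phi v False = U)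
     \<or> (0 < c \<and> (\<exists>T. QQ phi W (c - 1) T \<and> T \<union> PosS phi v True = U))"
proof
  assume "QQ phi (insert v W) c U"
  then obtain S where S: "S \<subseteq> insert v W" "card S \<le> c" "satW phi (insert v W) S = U" unfolding QQ_def by blast
  have fS: "finite S" using S(1) assms(1) finite_subset by auto
  have e: "satW phi W S = satW phi W (S - {v})" by (rule satW_cong) (use assms in auto)
  show "(\<exists>T. QQ phi W c T \<and> T \<union> PosS phi v False = U)
     \<or> (0 < c \<and> (\<exists>T. QQ phi W (c - 1) T \<and> T \<union> PosS phi v True = U))"
  proof (cases "v \<in> S")
    case True
    have "card (S - {v}) = card S - 1" using True fS by simp
    moreover have "card S > 0" using True fS card_gt_0_iff by blast
    ultimately have "QQ phi W (c - 1) (satW phi W (S - {v}))" unfolding QQ_def using S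
      by (intro exI[of _ "S - {v}"]) auto
    then show ?thesis using S True e \<open>card S > 0\<close> by (auto simp: satW_insert)
  next
    case False
    then have "S \<subseteq> W" using S by auto
    then have "QQ phi W c (satW phi W S)" unfolding QQ_def using S by auto
    then show ?thesis using S False by (auto simp: satW_insert)
  qed
next
  assume "(\<exists>T. QQ phi W c T \<and> T \<union> PosS phi v False = U)
     \<or> (0 < c \<and> (\<exists>T. QQ phi W (c - 1) T \<and> T \<union> PosS phi v True = U))"
  then show "QQ phi (insert v W) c U"
  proof
    assume "\<exists>T. QQ phi W c T \<and> T \<union> PosS phi v False = U"
    then obtain S where S: "S \<subseteq> W" "card S \<le> c" "satW phi W S \<union> PosS phi v False = U"
      unfolding QQ_def by blast
    have "v \<notin> S" using S assms by auto
    then show ?thesis unfolding QQ_def using S by (intro exI[of _ S]) (auto simp: satW_insert)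
  next
    assume "0 < c \<and> (\<exists>T. QQ phi W (c - 1) T \<and> T \<union> PosS phi v True = U)"
    then obtain S where S: "S \<subseteq> W" "card S \<le> c - 1" "satW phi W S \<union> PosS phi v True = U" "0 < c"
      unfolding QQ_def by blast
    have fS: "finite S" using S(1) assms(1) finite_subset by auto
    have vS: "v \<notin> S" using S assms by auto
    have "satW phi W (insert v S) = satW phi W S" by (rule satW_cong) (use assms in auto)
    moreover have "card (insert v S) \<le> c" using fS vS S by simp
    ultimately show ?thesis unfolding QQ_def using S
      by (intro exI[of _ "insert v S"]) (auto simp: satW_insert)
  qed
qed

lemma QQ_empty: "QQ phi {} c T \<longleftrightarrow> T = {}"
  unfolding QQ_def satW_def by auto

definition goodT :: "cnf \<Rightarrow> nat \<Rightarrow> nat set \<Rightarrow> (nat \<Rightarrow> nat) \<Rightarrow> bool" where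
  "goodT phi k W F \<longleftrightarrow> (\<forall>U<2^length phi. F U \<le> Suc k \<and> (\<forall>c\<le>k. F U \<le> c \<longleftrightarrow> QQ phi W c (bs U)))"

definition forcedT :: "nat \<Rightarrow> nat \<Rightarrow> (nat \<Rightarrow> nat) \<Rightarrow> nat set \<Rightarrow> (nat \<Rightarrow> nat) \<Rightarrow> bool" where
  "forcedT m k F Z G \<longleftrightarrow> (\<forall>U<2^m. G U \<le> Suc k \<and> (\<forall>c\<le>k. G U \<le> c \<longleftrightarrow> (\<exists>T<2^m. bs T \<union> Z = bs U \<and> F T \<le> c)))"

lemma goodT_init: "goodT phi k {} (\<lambda>U. if U = 0 then 0 else Suc k)"
  unfolding goodT_def QQ_empty using bs_inj[of _ 0] by auto

lemma forcedT_init: "\<forall>U<2^m. F U \<le> Suc k \<Longrightarrow> forcedT m k F {} F"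
  unfolding forcedT_def using bs_inj by auto

lemma forcedT_step:
  assumes "forcedT m k F Z G" "i < m" "Z \<subseteq> {..<m}"
  shows "forcedT m k F (insert i Z) (\<lambda>U. if bit U i then min (G U) (G (U - 2^i)) else Suc k)"
  unfolding forcedT_def
proof (intro allI impI conjI)
  fix U :: nat assume U: "U < 2^m"
  have GU: "G U \<le> Suc k" using assms U unfolding forcedT_def by auto
  then show "(if bit U i then min (G U) (G (U - 2^i)) else Suc k) \<le> Suc k" by auto
  fix c assume c: "c \<le> k"
  have "(if bit U i then min (G U) (G (U - 2^i)) else Suc k) \<le> c \<longleftrightarrow> (bit U i \<and> (G U \<le> c \<or> G (U - 2^i) \<le> c))"
    using c by auto
  also have "\<dots> \<longleftrightarrow> (\<exists>T'<2^m. bs T' \<union> {i} = bs U \<and> G T' \<le> c)" using force_char[OF U assms(2), of G c] by blast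
  also have "\<dots> \<longleftrightarrow> (\<exists>T<2^m. bs T \<union> insert i Z = bs U \<and> F T \<le> c)"
  proof
    assume "\<exists>T'<2^m. bs T' \<union> {i} = bs U \<and> G T' \<le> c"
    then obtain T' where T': "T' < 2^m" "bs T' \<union> {i} = bs U" "G T' \<le> c" by blast
    then obtain T where "T < 2^m" "bs T \<union> Z = bs T'" "F T \<le> c" using assms(1) c unfolding forcedT_def by blast
    then show "\<exists>T<2^m. bs T \<union> insert i Z = bs U \<and> F T \<le> c" using T' by (intro exI[of _ T]) auto
  next
    assume "\<exists>T<2^m. bs T \<union> insert i Z = bs U \<and> F T \<le> c"
    then obtain T where T: "T < 2^m" "bs T \<union> insert i Z = bs U" "F T \<le> c" by blast
    obtain T' where T': "T' < 2^m" "bs T' = bs T \<union> Z" using bs_surj[of "bs T \<union> Z" m] bs_sub[OF T(1)] assms(3) by auto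
    have "G T' \<le> c" using assms(1) T' T c unfolding forcedT_def by blast
    then show "\<exists>T'<2^m. bs T' \<union> {i} = bs U \<and> G T' \<le> c" using T' T by (intro exI[of _ T']) auto
  qed
  finally show "((if bit U i then min (G U) (G (U - 2^i)) else Suc k) \<le> c) = (\<exists>T<2^m. bs T \<union> insert i Z = bs U \<and> F T \<le> c)" .
qed

lemma goodT_step:
  assumes "goodT phi k W A" "forcedT (length phi) k A (PosS phi v True) B"
    "forcedT (length phi) k A (PosS phi v False) C" "v \<notin> W" "finite W"
  shows "goodT phi k (insert v W) (\<lambda>U. min (min (B U + 1) (Suc k)) (C U))"
  unfolding goodT_def
proof (intro allI impI conjI)
  let ?m = "length phi"
  fix U :: nat assume U: "U < 2^?m"
  show "min (min (B U + 1) (Suc k)) (C U) \<le> Suc k" by simp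
  fix c assume c: "c \<le> k"
  have liftT: "(\<exists>T<2^?m. bs T \<union> Z = bs U \<and> A T \<le> c') \<longleftrightarrow> (\<exists>T. QQ phi W c' T \<and> T \<union> Z = bs U)"
    if "c' \<le> k" for Z c'
  proof
    assume "\<exists>T<2^?m. bs T \<union> Z = bs U \<and> A T \<le> c'"
    then show "\<exists>T. QQ phi W c' T \<and> T \<union> Z = bs U" using assms(1) that unfolding goodT_def by blast
  next
    assume "\<exists>T. QQ phi W c' T \<and> T \<union> Z = bs U"
    then obtain T where T: "QQ phi W c' T" "T \<union> Z = bs U" by blast
    have "T \<subseteq> {..<?m}" using T(1) satW_sub unfolding QQ_def by blast
    then obtain T0 where "T0 < 2^?m" "bs T0 = T" using bs_surj by blast
    then show "\<exists>T<2^?m. bs T \<union> Z = bs U \<and> A T \<le> c'" using T assms(1) that unfolding goodT_def by auto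
  qed
  have c1: "c - 1 \<le> k" using c by simp
  have fB: "B U \<le> c - 1 \<longleftrightarrow> (\<exists>T<2^?m. bs T \<union> PosS phi v True = bs U \<and> A T \<le> c - 1)"
    using assms(2) U c1 unfolding forcedT_def by blast
  have fC: "C U \<le> c \<longleftrightarrow> (\<exists>T<2^?m. bs T \<union> PosS phi v False = bs U \<and> A T \<le> c)"
    using assms(3) U c unfolding forcedT_def by blast
  have "min (min (B U + 1) (Suc k)) (C U) \<le> c \<longleftrightarrow> (0 < c \<and> B U \<le> c - 1) \<or> C U \<le> c" using c by auto
  also have "\<dots> \<longleftrightarrow> (0 < c \<and> (\<exists>T. QQ phi W (c - 1) T \<and> T \<union> PosS phi v True = bs U))
      \<or> (\<exists>T. QQ phi W c T \<and> T \<union> PosS phi v False = bs U)"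
    unfolding fB fC liftT[OF c1] liftT[OF c] ..
  also have "\<dots> \<longleftrightarrow> QQ phi (insert v W) c (bs U)" using dp_step[OF assms(5,4)] by blast
  finally show "(min (min (B U + 1) (Suc k)) (C U) \<le> c) = QQ phi (insert v W) c (bs U)" .
qed

definition Vars :: "cnf \<Rightarrow> nat set" where "Vars phi = {v. \<exists>b i. (b,v,i) \<in> set (lits phi)}"

lemma Vars_iff: "v \<in> Vars phi \<longleftrightarrow> (\<exists>b i. i < length phi \<and> (b,v) \<in> set (phi!i))"
  unfolding Vars_def using set_lits by auto

lemma answer_char:
  assumes "wf_cnf n phi"
  shows "max_k_sat n phi k p \<longleftrightarrow> (\<exists>T. QQ phi (Vars phi) k T \<and> p \<le> card T)"
proof -
  have vars: "v \<in> Vars phi" if "i < length phi" "(b,v) \<in> set (phi!i)" for i b v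
    using that Vars_iff by blast
  have sat: "satW phi (Vars phi) S = {i. i < length phi \<and> clause_sat S (phi!i)}" for S
    unfolding satW_def clause_sat_def
  proof (rule Collect_cong)
    fix i
    show "(i < length phi \<and> (\<exists>(b, v)\<in>set (phi ! i). v \<in> Vars phi \<and> (v \<in> S) = b)) =
          (i < length phi \<and> (\<exists>(b, v)\<in>set (phi ! i). (v \<in> S) = b))"
      using vars[of i] by blast
  qed
  have ns: "num_sat S phi = card (satW phi (Vars phi) S)" for S
    unfolding num_sat_def sat length_filter_conv_card by simp
  have Vn: "Vars phi \<subseteq> {0..<n}"
  proof
    fix v assume "v \<in> Vars phi"
    then obtain b i where bi: "i < length phi" "(b,v) \<in> set (phi!i)" using Vars_iff by blast
    have "phi!i \<in> set phi" using bi(1) by simp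
    then show "v \<in> {0..<n}" using assms bi(2) unfolding wf_cnf_def by fastforce
  qed
  show ?thesis
  proof
    assume "max_k_sat n phi k p"
    then obtain S where S: "S \<subseteq> {0..<n}" "card S \<le> k" "p \<le> num_sat S phi" unfolding max_k_sat_def by blast
    have fS: "finite S" using S(1) finite_subset by blast
    have "card (S \<inter> Vars phi) \<le> card S" using fS by (simp add: card_mono)
    then have c: "card (S \<inter> Vars phi) \<le> k" using S(2) by simp
    have e: "satW phi (Vars phi) (S \<inter> Vars phi) = satW phi (Vars phi) S" by (rule satW_cong) blast
    have "QQ phi (Vars phi) k (satW phi (Vars phi) S)" unfolding QQ_def
      using c e by (intro exI[of _ "S \<inter> Vars phi"]) simp
    moreover have "p \<le> card (satW phi (Vars phi) S)" using S(3) ns[of S] by simp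
    ultimately show "\<exists>T. QQ phi (Vars phi) k T \<and> p \<le> card T" by blast
  next
    assume "\<exists>T. QQ phi (Vars phi) k T \<and> p \<le> card T"
    then obtain S where S: "S \<subseteq> Vars phi" "card S \<le> k" "p \<le> card (satW phi (Vars phi) S)" unfolding QQ_def by blast
    have "S \<subseteq> {0..<n}" using S(1) Vn by blast
    then show "max_k_sat n phi k p" unfolding max_k_sat_def using S ns by metis
  qed
qed

lemma finite_Vars: "finite (Vars phi)"
proof -
  have "Vars phi \<subseteq> (\<lambda>x. fst (snd x)) ` set (lits phi)"
  proof
    fix v assume "v \<in> Vars phi"
    then obtain b i where "(b,v,i) \<in> set (lits phi)" unfolding Vars_def by blast
    then show "v \<in> (\<lambda>x. fst (snd x)) ` set (lits phi)" by (rule rev_image_eqI) simp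
  qed
  then show ?thesis using finite_subset by blast
qed



lemma wp_while_rule:
  assumes "I s" "\<And>s. I s \<Longrightarrow> fst s r \<noteq> 0 \<Longrightarrow> wp c (\<lambda>t s'. I s' \<and> \<mu> s' < \<mu> s \<and> t \<le> b) s"
    "\<And>t s'. I s' \<Longrightarrow> fst s' r = 0 \<Longrightarrow> t \<le> (\<mu> s + 1) * (b + 1) \<Longrightarrow> Q t s'"
  shows "wp (While r c) Q s"
  using wp_While[of I r c \<mu> b s, OF assms(2) assms(1)] assms(3) by (auto elim: wp_mono)

definition powc :: com where
  "powc = Seq (Const 20 1) (Seq (Add 26 4 13) (While 26 (Seq (Add 20 20 20) (Sub 26 26 1))))"

lemma powc_spec:
  assumes "R 4 = m" "R 13 = 0" "R 1 = 1"
  shows "wp powc (\<lambda>t s'. fst s' 20 = 2^m \<and> (\<forall>r. r \<notin> {20,26} \<longrightarrow> fst s' r = R r) \<and> snd s' = M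
     \<and> t \<le> 3 * m + 5) (R,M)"
proof -
  define I where "I s \<longleftrightarrow> fst s 26 \<le> m \<and> fst s 20 = 2^(m - fst s 26) \<and> (\<forall>r. r \<notin> {20,26} \<longrightarrow> fst s r = R r) \<and> snd s = M" for s :: state
  have step: "wp (Seq (Add 20 20 20) (Sub 26 26 1)) (\<lambda>t s'. I s' \<and> fst s' 26 < fst s 26 \<and> t \<le> 2) s"
    if Is: "I s" and nz: "fst s 26 \<noteq> 0" for s
  proof -
    have "2 ^ (m - fst s 26) + 2 ^ (m - fst s 26) = (2::nat) ^ (m - (fst s 26 - 1))"
    proof -
      obtain j where j: "fst s 26 = Suc j" using nz not0_implies_Suc by blast
      have "m - j = Suc (m - Suc j)" using Is j unfolding I_def by (simp add: Suc_diff_Suc)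
      then show ?thesis using j by simp
    qed
    moreover have "fst s 1 = 1" using Is assms unfolding I_def by auto
    ultimately show ?thesis using Is nz unfolding I_def by auto
  qed
  show ?thesis
    unfolding powc_def
    apply (rule wp_Const_seq, rule wp_Add_seq)
    apply (rule wp_while_rule[where I = I and \<mu> = "\<lambda>s. fst s 26" and b = 2])
    subgoal using assms by (simp add: I_def)
    subgoal by (rule step)
    subgoal using assms by (auto simp: I_def)
    done
qed

definition keep :: "(nat \<Rightarrow> nat) \<Rightarrow> (nat \<Rightarrow> nat) \<Rightarrow> nat set \<Rightarrow> bool" where
  "keep R R' S \<longleftrightarrow> (\<forall>r. r \<notin> S \<longrightarrow> R' r = R r)"

definition initA :: com where
  "initA = Seq (Add 44 20 13) (Seq (While 44 (Seq (Sub 44 44 1) (Seq (Add 46 21 44) (Store 46 25)))) (Store 21 13))"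

lemma initA_spec:
  assumes "R 20 = P" "R 21 = Ab" "R 25 = K" "R 13 = 0" "R 1 = 1" "0 < P"
  shows "wp initA (\<lambda>t s'. (\<forall>U<P. snd s' (Ab + U) = (if U = 0 then 0 else K))
     \<and> (\<forall>a. a < Ab \<or> Ab + P \<le> a \<longrightarrow> snd s' a = M a) \<and> keep R (fst s') {44,46}
     \<and> t \<le> 4 * P + 6) (R,M)"
proof -
  define I where "I s \<longleftrightarrow> fst s 44 \<le> P \<and> (\<forall>U. fst s 44 \<le> U \<and> U < P \<longrightarrow> snd s (Ab + U) = K)
     \<and> (\<forall>a. \<not> (Ab + fst s 44 \<le> a \<and> a < Ab + P) \<longrightarrow> snd s a = M a) \<and> keep R (fst s) {44,46}" for s :: state
  have step: "wp (Seq (Sub 44 44 1) (Seq (Add 46 21 44) (Store 46 25))) (\<lambda>t s'. I s' \<and> fst s' 44 < fst s 44 \<and> t \<le> 3) s"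
    if Is: "I s" and nz: "fst s 44 \<noteq> 0" for s
  proof -
    have r: "fst s 1 = 1" "fst s 21 = Ab" "fst s 25 = K" using Is assms unfolding I_def keep_def by auto
    show ?thesis using Is nz r unfolding I_def keep_def by (auto simp: less_Suc_eq_le)
  qed
  show ?thesis
    unfolding initA_def
    apply (rule wp_Add_seq)
    apply (rule wp_seqI)
    apply (rule wp_While[where I = I and \<mu> = "\<lambda>s. fst s 44" and b = 3])
    subgoal by (rule step)
    subgoal using assms by (simp add: I_def keep_def)
    subgoal for t1 s1
      using assms by (auto simp: I_def keep_def)
    done
qed

definition copyl :: com where
  "copyl = Seq (Add 44 20 13) (While 44 (Seq (Sub 44 44 1) (Seq (Add 46 21 44) (Seq (Load 47 46)
     (Seq (Add 46 22 44) (Seq (Store 46 47) (Seq (Add 46 23 44) (Store 46 47))))))))"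

lemma copyl_spec:
  assumes "R 20 = P" "R 21 = Ab" "R 22 = Bb" "R 23 = Cb" "R 13 = 0" "R 1 = 1" "Ab + P \<le> Bb" "Bb + P \<le> Cb"
  shows "wp copyl (\<lambda>t s'. (\<forall>U<P. snd s' (Bb + U) = M (Ab + U) \<and> snd s' (Cb + U) = M (Ab + U))
     \<and> (\<forall>a. \<not> (Bb \<le> a \<and> a < Bb + P) \<and> \<not> (Cb \<le> a \<and> a < Cb + P) \<longrightarrow> snd s' a = M a)
     \<and> keep R (fst s') {44,46,47} \<and> t \<le> 8 * P + 9) (R,M)"
proof -
  define I where "I s \<longleftrightarrow> fst s 44 \<le> P \<and> (\<forall>U. fst s 44 \<le> U \<and> U < P \<longrightarrow> snd s (Bb + U) = M (Ab + U) \<and> snd s (Cb + U) = M (Ab + U))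
     \<and> (\<forall>a. \<not> (Bb + fst s 44 \<le> a \<and> a < Bb + P) \<and> \<not> (Cb + fst s 44 \<le> a \<and> a < Cb + P) \<longrightarrow> snd s a = M a)
     \<and> keep R (fst s) {44,46,47}" for s :: state
  have step: "wp (Seq (Sub 44 44 1) (Seq (Add 46 21 44) (Seq (Load 47 46)
     (Seq (Add 46 22 44) (Seq (Store 46 47) (Seq (Add 46 23 44) (Store 46 47)))))))
     (\<lambda>t s'. I s' \<and> fst s' 44 < fst s 44 \<and> t \<le> 7) s"
    if Is: "I s" and nz: "fst s 44 \<noteq> 0" for s
  proof -
    have r: "fst s 1 = 1" "fst s 21 = Ab" "fst s 22 = Bb" "fst s 23 = Cb" using Is assms unfolding I_def keep_def by auto
    obtain u where u: "fst s 44 = Suc u" using nz not0_implies_Suc by blast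
    have rd: "snd s (Ab + u) = M (Ab + u)" using Is u assms unfolding I_def by auto
    let ?X = "snd s (Ab + u)"
    have post: "wp (Seq (Sub 44 44 1) (Seq (Add 46 21 44) (Seq (Load 47 46)
     (Seq (Add 46 22 44) (Seq (Store 46 47) (Seq (Add 46 23 44) (Store 46 47)))))))
     (\<lambda>t s'. fst s' 44 = u \<and> keep (fst s) (fst s') {44,46,47} \<and> snd s' = (snd s)(Bb + u := ?X, Cb + u := ?X) \<and> t = 7) s"
      using r u by (simp add: keep_def)
    have mem: "I ((fst s')(44 := u), (snd s)(Bb + u := ?X, Cb + u := ?X))" if "keep (fst s) (fst s') {44,46,47}" for s'
    proof -
      have a1: "u \<le> P" using Is u unfolding I_def by simp
      have a2: "\<forall>U. u \<le> U \<and> U < P \<longrightarrow> ((snd s)(Bb + u := ?X, Cb + u := ?X)) (Bb + U) = M (Ab + U)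
           \<and> ((snd s)(Bb + u := ?X, Cb + u := ?X)) (Cb + U) = M (Ab + U)"
      proof (intro allI impI)
        fix U assume U: "u \<le> U \<and> U < P"
        have ne: "Bb + U \<noteq> Cb + u" "Cb + U \<noteq> Bb + u" using U assms by auto
        show "((snd s)(Bb + u := ?X, Cb + u := ?X)) (Bb + U) = M (Ab + U)
           \<and> ((snd s)(Bb + u := ?X, Cb + u := ?X)) (Cb + U) = M (Ab + U)"
        proof (cases "U = u")
          case True then show ?thesis using rd ne by simp
        next
          case False then show ?thesis using Is u U ne unfolding I_def by simp
        qed
      qed
      have a3: "\<forall>a. \<not> (Bb + u \<le> a \<and> a < Bb + P) \<and> \<not> (Cb + u \<le> a \<and> a < Cb + P) \<longrightarrow> ((snd s)(Bb + u := ?X, Cb + u := ?X)) a = M a"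
        using Is u unfolding I_def by auto
      have a4: "keep R ((fst s')(44 := u)) {44,46,47}" using Is that unfolding I_def keep_def by auto
      show ?thesis unfolding I_def using a1 a2 a3 a4 by simp
    qed
    show ?thesis
    proof (rule wp_mono[OF post])
      fix t :: nat and s' :: state assume h: "fst s' 44 = u \<and> keep (fst s) (fst s') {44,46,47} \<and> snd s' = (snd s)(Bb + u := ?X, Cb + u := ?X) \<and> t = 7"
      then have e: "s' = ((fst s')(44 := u), (snd s)(Bb + u := ?X, Cb + u := ?X))" by (cases s') (simp add: fun_upd_idem)
      show "I s' \<and> fst s' 44 < fst s 44 \<and> t \<le> 7" using mem[of s'] h u by (subst e) simp
    qed
  qed
  show ?thesis
    unfolding copyl_def
    apply (rule wp_Add_seq)
    apply (rule wp_while_rule[where I = I and \<mu> = "\<lambda>s. fst s 44" and b = 7])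
    subgoal using assms by (simp add: I_def keep_def)
    subgoal by (rule step)
    subgoal for t s'
      using assms by (auto simp: I_def keep_def)
    done
qed

definition combl :: com where
  "combl = Seq (Add 44 20 13) (While 44 (Seq (Sub 44 44 1) (Seq (Add 46 22 44) (Seq (Load 47 46)
     (Seq (Add 47 47 1) (Seq (Sub 48 47 25) (Seq (Sub 47 47 48) (Seq (Add 46 23 44) (Seq (Load 48 46)
     (Seq (Sub 49 47 48) (Seq (Sub 47 47 49) (Seq (Add 46 21 44) (Store 46 47)))))))))))))"

lemma combl_spec:
  assumes "R 20 = P" "R 21 = Ab" "R 22 = Bb" "R 23 = Cb" "R 13 = 0" "R 1 = 1" "R 25 = K" "Ab + P \<le> Bb" "Bb + P \<le> Cb"
  shows "wp combl (\<lambda>t s'. (\<forall>U<P. snd s' (Ab + U) = min (min (M (Bb + U) + 1) K) (M (Cb + U)))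
     \<and> (\<forall>a. \<not> (Ab \<le> a \<and> a < Ab + P) \<longrightarrow> snd s' a = M a)
     \<and> keep R (fst s') {44,46,47,48,49} \<and> t \<le> 13 * P + 14) (R,M)"
proof -
  define I where "I s \<longleftrightarrow> fst s 44 \<le> P \<and> (\<forall>U. fst s 44 \<le> U \<and> U < P \<longrightarrow> snd s (Ab + U) = min (min (M (Bb + U) + 1) K) (M (Cb + U)))
     \<and> (\<forall>a. \<not> (Ab + fst s 44 \<le> a \<and> a < Ab + P) \<longrightarrow> snd s a = M a)
     \<and> keep R (fst s) {44,46,47,48,49}" for s :: state
  have step: "wp (Seq (Sub 44 44 1) (Seq (Add 46 22 44) (Seq (Load 47 46)
     (Seq (Add 47 47 1) (Seq (Sub 48 47 25) (Seq (Sub 47 47 48) (Seq (Add 46 23 44) (Seq (Load 48 46)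
     (Seq (Sub 49 47 48) (Seq (Sub 47 47 49) (Seq (Add 46 21 44) (Store 46 47))))))))))))
     (\<lambda>t s'. I s' \<and> fst s' 44 < fst s 44 \<and> t \<le> 12) s"
    if Is: "I s" and nz: "fst s 44 \<noteq> 0" for s
  proof -
    have r: "fst s 1 = 1" "fst s 21 = Ab" "fst s 22 = Bb" "fst s 23 = Cb" "fst s 25 = K"
      using Is assms unfolding I_def keep_def by auto
    obtain u where u: "fst s 44 = Suc u" using nz not0_implies_Suc by blast
    have rd: "snd s (Bb + u) = M (Bb + u)" "snd s (Cb + u) = M (Cb + u)" using Is u assms unfolding I_def by auto
    have mn: "x - (x - y) = min x y" for x y :: nat by simp
    let ?V = "min (min (snd s (Bb + u) + 1) K) (snd s (Cb + u))"
    have post: "wp (Seq (Sub 44 44 1) (Seq (Add 46 22 44) (Seq (Load 47 46)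
     (Seq (Add 47 47 1) (Seq (Sub 48 47 25) (Seq (Sub 47 47 48) (Seq (Add 46 23 44) (Seq (Load 48 46)
     (Seq (Sub 49 47 48) (Seq (Sub 47 47 49) (Seq (Add 46 21 44) (Store 46 47))))))))))))
     (\<lambda>t s'. fst s' 44 = u \<and> keep (fst s) (fst s') {44,46,47,48,49} \<and> snd s' = (snd s)(Ab + u := ?V) \<and> t = 12) s"
      using r u by (simp add: mn keep_def)
    have mem: "I ((fst s')(44 := u), (snd s)(Ab + u := ?V))" if "keep (fst s) (fst s') {44,46,47,48,49}" for s'
    proof -
      have a1: "u \<le> P" using Is u unfolding I_def by simp
      have a2: "\<forall>U. u \<le> U \<and> U < P \<longrightarrow> ((snd s)(Ab + u := ?V)) (Ab + U) = min (min (M (Bb + U) + 1) K) (M (Cb + U))"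
      proof (intro allI impI)
        fix U assume U: "u \<le> U \<and> U < P"
        show "((snd s)(Ab + u := ?V)) (Ab + U) = min (min (M (Bb + U) + 1) K) (M (Cb + U))"
        proof (cases "U = u")
          case True then show ?thesis using rd by simp
        next
          case False then show ?thesis using Is u U unfolding I_def by simp
        qed
      qed
      have a3: "\<forall>a. \<not> (Ab + u \<le> a \<and> a < Ab + P) \<longrightarrow> ((snd s)(Ab + u := ?V)) a = M a"
        using Is u unfolding I_def by auto
      have a4: "keep R ((fst s')(44 := u)) {44,46,47,48,49}" using Is that unfolding I_def keep_def by auto
      show ?thesis unfolding I_def using a1 a2 a3 a4 by simp
    qed
    show ?thesis
    proof (rule wp_mono[OF post])
      fix t :: nat and s' :: state assume h: "fst s' 44 = u \<and> keep (fst s) (fst s') {44,46,47,48,49} \<and> snd s' = (snd s)(Ab + u := ?V) \<and> t = 12"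
      then have e: "s' = ((fst s')(44 := u), (snd s)(Ab + u := ?V))" by (cases s') (simp add: fun_upd_idem)
      show "I s' \<and> fst s' 44 < fst s 44 \<and> t \<le> 12" using mem[of s'] h u by (subst e) simp
    qed

  qed
  show ?thesis
    unfolding combl_def
    apply (rule wp_Add_seq)
    apply (rule wp_while_rule[where I = I and \<mu> = "\<lambda>s. fst s 44" and b = 12])
    subgoal using assms by (simp add: I_def keep_def)
    subgoal by (rule step)
    subgoal for t s'
      using assms by (auto simp: I_def keep_def)
    done
qed

lemma mod_pred: "0 < (d::nat) \<Longrightarrow> 0 < U \<Longrightarrow> (U - 1) mod d = (if U mod d = 0 then d - 1 else U mod d - 1)"
proof -
  assume d: "0 < d" and U: "0 < U"
  obtain x where x: "U = Suc x" using U not0_implies_Suc by blast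
  show ?thesis using d unfolding x by (auto simp: mod_Suc)
qed

definition fmin :: com where
  "fmin = Seq (Load 47 46) (Seq (Sub 48 46 42) (Seq (Load 48 48) (Seq (Sub 49 47 48) (Seq (Sub 47 47 49) (Store 46 47)))))"

definition fbody :: com where
  "fbody = Seq (Sub 44 44 1) (Seq (Add 46 40 44) (Seq (Sub 49 42 45) (Seq (If 49 (Store 46 25) fmin)
     (If 45 (Sub 45 45 1) (Sub 45 43 1)))))"

definition force :: com where
  "force = Seq (Const 42 1) (Seq (Add 49 41 13) (Seq (While 49 (Seq (Add 42 42 42) (Sub 49 49 1)))
     (Seq (Add 43 42 42) (Seq (Sub 45 43 1) (Seq (Add 44 20 13) (While 44 fbody))))))"

lemma fbody_post:
  assumes "fst s 44 = Suc U" "fst s 42 = pw" "fst s 45 = r" "fst s 40 = Xb" "fst s 1 = 1" "fst s 25 = K"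
    "fst s 43 = pw2" "r \<le> U"
  shows "wp fbody (\<lambda>t s'. fst s' 44 = U \<and> fst s' 45 = (if r = 0 then pw2 - 1 else r - 1)
     \<and> keep (fst s) (fst s') {44,45,46,47,48,49}
     \<and> snd s' = (snd s)(Xb + U := (if pw \<le> r then min (snd s (Xb + U)) (snd s (Xb + (U - pw))) else K))
     \<and> t \<le> 13) s"
proof (cases "pw \<le> r")
  case True
  have e: "Xb + U - pw = Xb + (U - pw)" using True assms(8) by simp
  have mn: "x - (x - y) = min x y" for x y :: nat by simp
  show ?thesis using assms True e unfolding fbody_def fmin_def by (simp add: keep_def mn)
next
  case False
  then show ?thesis using assms unfolding fbody_def by (simp add: keep_def)
qed

lemma force_spec:
  assumes "R 40 = Xb" "R 41 = i" "i < m" "R 20 = 2^m" "R 25 = K" "R 13 = 0" "R 1 = 1"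
  shows "wp force (\<lambda>t s'. (\<forall>U<2^m. snd s' (Xb + U) = (if bit U i then min (M (Xb + U)) (M (Xb + (U - 2^i))) else K))
     \<and> (\<forall>a. \<not> (Xb \<le> a \<and> a < Xb + 2^m) \<longrightarrow> snd s' a = M a) \<and> keep R (fst s') {42,43,44,45,46,47,48,49}
     \<and> t \<le> 3 * i + 14 * 2^m + 25) (R,M)"
proof -
  let ?P = "2^m :: nat"
  let ?G = "\<lambda>U. M (Xb + U)"
  let ?G' = "\<lambda>U. if bit U i then min (M (Xb + U)) (M (Xb + (U - 2^i))) else K"
  define J where "J s \<longleftrightarrow> fst s 49 \<le> i \<and> fst s 42 = 2^(i - fst s 49) \<and> keep R (fst s) {42,49} \<and> snd s = M" for s :: state
  have pstep: "wp (Seq (Add 42 42 42) (Sub 49 49 1)) (\<lambda>t s'. J s' \<and> fst s' 49 < fst s 49 \<and> t \<le> 2) s"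
    if Js: "J s" and nz: "fst s 49 \<noteq> 0" for s
  proof -
    obtain j where j: "fst s 49 = Suc j" using nz not0_implies_Suc by blast
    have "i - j = Suc (i - Suc j)" using Js j unfolding J_def by (simp add: Suc_diff_Suc)
    then have "2 ^ (i - fst s 49) + 2 ^ (i - fst s 49) = (2::nat) ^ (i - (fst s 49 - 1))" using j by simp
    moreover have "fst s 1 = 1" using Js assms unfolding J_def keep_def by auto
    ultimately show ?thesis using Js nz unfolding J_def keep_def by auto
  qed
  define I where "I s \<longleftrightarrow> fst s 44 \<le> ?P \<and> fst s 42 = 2^i \<and> fst s 43 = 2^Suc i
     \<and> (0 < fst s 44 \<longrightarrow> fst s 45 = (fst s 44 - 1) mod 2^Suc i)
     \<and> (\<forall>U < fst s 44. snd s (Xb + U) = ?G U) \<and> (\<forall>U. fst s 44 \<le> U \<and> U < ?P \<longrightarrow> snd s (Xb + U) = ?G' U)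
     \<and> (\<forall>a. \<not> (Xb \<le> a \<and> a < Xb + ?P) \<longrightarrow> snd s a = M a) \<and> keep R (fst s) {42,43,44,45,46,47,48,49}" for s :: state
  have step: "wp fbody (\<lambda>t s'. I s' \<and> fst s' 44 < fst s 44 \<and> t \<le> 13) s"
    if Is: "I s" and nz: "fst s 44 \<noteq> 0" for s
  proof -
    obtain U where U: "fst s 44 = Suc U" using nz not0_implies_Suc by blast
    let ?r = "fst s 45"
    have r: "?r = U mod 2^Suc i" using Is U unfolding I_def by simp
    have rU: "?r \<le> U" using r by simp
    have regs: "fst s 40 = Xb" "fst s 1 = 1" "fst s 25 = K" using Is assms unfolding I_def keep_def by auto
    have bit: "bit U i \<longleftrightarrow> 2^i \<le> ?r" using r bit_iff_mod by simp
    have val: "(if 2^i \<le> ?r then min (snd s (Xb + U)) (snd s (Xb + (U - 2^i))) else K) = ?G' U"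
    proof (cases "bit U i")
      case True
      then have "2^i \<le> U" using bit rU by simp
      have l: "U - 2^i < fst s 44" "U < fst s 44" using U by auto
      have all: "\<forall>V < fst s 44. snd s (Xb + V) = ?G V" using Is unfolding I_def by blast
      have "snd s (Xb + U) = ?G U" "snd s (Xb + (U - 2^i)) = ?G (U - 2^i)" using all l by blast+
      then show ?thesis using True bit by simp
    next
      case False then show ?thesis using bit by simp
    qed
    have newr: "(if ?r = 0 then 2^Suc i - 1 else ?r - 1) = (U - 1) mod 2^Suc i" if "0 < U"
      using mod_pred[of "2^Suc i" U] that r by simp
    show ?thesis
    proof (rule wp_mono[OF fbody_post[OF U, of "2^i" ?r Xb K "2^Suc i"]])
      show "fst s 42 = 2^i" "fst s 43 = 2^Suc i" using Is unfolding I_def by auto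
    next
      fix t :: nat and s' :: state
      assume h: "fst s' 44 = U \<and> fst s' 45 = (if ?r = 0 then 2^Suc i - 1 else ?r - 1)
     \<and> keep (fst s) (fst s') {44,45,46,47,48,49}
     \<and> snd s' = (snd s)(Xb + U := (if 2^i \<le> ?r then min (snd s (Xb + U)) (snd s (Xb + (U - 2^i)))else K))
     \<and> t \<le> 13"
      have m: "snd s' = (snd s)(Xb + U := ?G' U)" using h val by simp
      have a1: "fst s' 44 \<le> ?P" "fst s' 42 = 2^i" "fst s' 43 = 2^Suc i"
        using h Is U unfolding I_def keep_def by auto
      have a2: "0 < fst s' 44 \<longrightarrow> fst s' 45 = (fst s' 44 - 1) mod 2^Suc i" using h newr by auto
      have a3: "\<forall>V < fst s' 44. snd s' (Xb + V) = ?G V" using h m Is U unfolding I_def by auto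
      have a4: "\<forall>V. fst s' 44 \<le> V \<and> V < ?P \<longrightarrow> snd s' (Xb + V) = ?G' V"
      proof (intro allI impI)
        fix V assume V: "fst s' 44 \<le> V \<and> V < ?P"
        show "snd s' (Xb + V) = ?G' V"
        proof (cases "V = U")
          case True then show ?thesis using m by simp
        next
          case False then have "Suc U \<le> V" using V h by simp
          then show ?thesis using m Is U V False unfolding I_def by simp
        qed
      qed
      have a5: "\<forall>a. \<not> (Xb \<le> a \<and> a < Xb + ?P) \<longrightarrow> snd s' a = M a" using m Is U unfolding I_def by auto
      have a6: "keep R (fst s') {42,43,44,45,46,47,48,49}" using h Is unfolding I_def keep_def by auto
      show "I s' \<and> fst s' 44 < fst s 44 \<and> t \<le> 13" unfolding I_def using a1 a2 a3 a4 a5 a6 h U by simp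
    qed (use regs rU in auto)
  qed
  have dvd: "2^Suc i dvd ?P" using assms(3) le_imp_power_dvd[of "Suc i" m "2::nat"] by simp
  have Pmod: "(?P - 1) mod 2^Suc i = 2^Suc i - 1" using mod_pred[of "2^Suc i" ?P] dvd by simp
  show ?thesis
    unfolding force_def
    apply (rule wp_Const_seq, rule wp_Add_seq)
    apply (rule wp_seqI)
    apply (rule wp_While[where I = J and \<mu> = "\<lambda>s. fst s 49" and b = 2])
    subgoal by (rule pstep)
    subgoal using assms by (simp add: J_def keep_def)
    subgoal for t1 s1
      apply (rule wp_Add_seq, rule wp_Sub_seq, rule wp_Add_seq)
      apply (rule wp_while_rule[where I = I and \<mu> = "\<lambda>s. fst s 44" and b = 13])
      subgoal using assms Pmod by (auto simp: I_def J_def keep_def)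
      subgoal by (rule step)
      subgoal for t s'
        using assms by (auto simp: I_def J_def keep_def)
      done
    done
qed

definition ifeq :: "nat \<Rightarrow> nat \<Rightarrow> com \<Rightarrow> com" where
  "ifeq a b c = Seq (Sub 37 a b) (Seq (Sub 38 b a) (If 37 (Seq Skip Skip) (If 38 Skip c)))"

definition pbody :: com where
  "pbody = Seq (Add 49 42 42) (Seq (ifeq 44 49 (Add 42 42 42)) (Seq (Sub 46 44 42) (Seq (Add 46 24 46)
    (Seq (Load 47 46) (Seq (Add 47 47 1) (Seq (Add 46 24 44) (Seq (Store 46 47) (Seq (Add 44 44 1) (Sub 45 45 1)))))))))"

definition popc :: com where
  "popc = Seq (Store 24 13) (Seq (Const 42 1) (Seq (Const 44 1) (Seq (Sub 45 20 1) (While 45 pbody))))"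

lemma pbody_post:
  assumes "fst s 44 = U" "fst s 42 = hp" "fst s 24 = PCb" "fst s 1 = 1"
  shows "wp pbody (\<lambda>t s'. fst s' 44 = U + 1 \<and> fst s' 45 = fst s 45 - 1
     \<and> fst s' 42 = (if U = hp + hp then hp + hp else hp) \<and> keep (fst s) (fst s') {37,38,42,44,45,46,47,49}
     \<and> snd s' = (snd s)(PCb + U := snd s (PCb + (U - (if U = hp + hp then hp + hp else hp))) + 1) \<and> t \<le> 15) s"
  using assms unfolding pbody_def ifeq_def by (simp add: keep_def)

lemma card_bs: "hp = 2^j \<Longrightarrow> hp \<le> U \<Longrightarrow> U < 2 * hp \<Longrightarrow> card (bs U) = Suc (card (bs (U - hp)))"
proof -
  assume h: "hp = 2^j" "hp \<le> U" "U < 2 * hp"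
  have x: "U - hp < 2^j" using h by simp
  have e: "bs U = insert j (bs (U - hp))" using bs_add[OF x] h by simp
  have f: "finite (bs (U - hp))" using bs_sub[OF x] finite_subset by blast
  show ?thesis using e f bs_notin[OF x] by simp
qed

lemma popc_spec:
  assumes "R 20 = P" "0 < P" "R 24 = PCb" "R 13 = 0" "R 1 = 1"
  shows "wp popc (\<lambda>t s'. (\<forall>U<P. snd s' (PCb + U) = card (bs U))
     \<and> (\<forall>a. \<not> (PCb \<le> a \<and> a < PCb + P) \<longrightarrow> snd s' a = M a)
     \<and> keep R (fst s') {37,38,42,44,45,46,47,49} \<and> t \<le> 16 * P + 10) (R,M)"
proof -
  define I where "I s \<longleftrightarrow> 1 \<le> fst s 44 \<and> fst s 44 \<le> P \<and> fst s 45 = P - fst s 44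
     \<and> (\<exists>j. fst s 42 = 2^j \<and> 2^j \<le> fst s 44 \<and> fst s 44 \<le> 2 * 2^j)
     \<and> (\<forall>V < fst s 44. snd s (PCb + V) = card (bs V))
     \<and> (\<forall>a. \<not> (PCb \<le> a \<and> a < PCb + fst s 44) \<longrightarrow> snd s a = M a)
     \<and> keep R (fst s) {37,38,42,44,45,46,47,49}" for s :: state
  have step: "wp pbody (\<lambda>t s'. I s' \<and> fst s' 45 < fst s 45 \<and> t \<le> 15) s"
    if Is: "I s" and nz: "fst s 45 \<noteq> 0" for s
  proof -
    let ?U = "fst s 44"
    obtain j where j: "fst s 42 = 2^j" "2^j \<le> ?U" "?U \<le> 2 * 2^j" using Is unfolding I_def by blast
    let ?hp = "fst s 42"
    define hp' where "hp' = (if ?U = ?hp + ?hp then ?hp + ?hp else ?hp)"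
    obtain j' where j': "hp' = 2^j'" "hp' \<le> ?U" "?U < 2 * hp'"
    proof (cases "?U = ?hp + ?hp")
      case True then show ?thesis using that[of "Suc j"] j unfolding hp'_def by auto
    next
      case False then show ?thesis using that[of j] j unfolding hp'_def by auto
    qed
    have regs: "fst s 24 = PCb" "fst s 1 = 1" using Is assms unfolding I_def keep_def by auto
    have UP: "?U < P" using Is nz unfolding I_def by simp
    have cb: "card (bs ?U) = snd s (PCb + (?U - hp')) + 1"
    proof -
      have "hp' > 0" using j' by simp
      then have "?U - hp' < ?U" using j' Is unfolding I_def by simp
      then have "snd s (PCb + (?U - hp')) = card (bs (?U - hp'))" using Is unfolding I_def by blast
      then show ?thesis using card_bs[OF j'] by simp
    qed
    show ?thesis
    proof (rule wp_mono[OF pbody_post[OF refl refl regs]])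
      fix t :: nat and s' :: state
      assume h: "fst s' 44 = ?U + 1 \<and> fst s' 45 = fst s 45 - 1
        \<and> fst s' 42 = (if ?U = ?hp + ?hp then ?hp + ?hp else ?hp) \<and> keep (fst s) (fst s') {37,38,42,44,45,46,47,49}
        \<and> snd s' = (snd s)(PCb + ?U := snd s (PCb + (?U - (if ?U = ?hp + ?hp then ?hp + ?hp else ?hp))) + 1) \<and> t \<le> 15"
      have m: "snd s' = (snd s)(PCb + ?U := card (bs ?U))" using h cb unfolding hp'_def by simp
      have a1: "1 \<le> fst s' 44" "fst s' 44 \<le> P" "fst s' 45 = P - fst s' 44" using h Is UP unfolding I_def by auto
      have a2: "\<exists>j. fst s' 42 = 2^j \<and> 2^j \<le> fst s' 44 \<and> fst s' 44 \<le> 2 * 2^j"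
        using h j' unfolding hp'_def by (intro exI[of _ j']) auto
      have a3: "\<forall>V < fst s' 44. snd s' (PCb + V) = card (bs V)"
      proof (intro allI impI)
        fix V assume V: "V < fst s' 44"
        show "snd s' (PCb + V) = card (bs V)"
        proof (cases "V = ?U")
          case True then show ?thesis unfolding m by simp
        next
          case False then have "V < ?U" using V h by simp
          then show ?thesis using Is False unfolding m I_def by simp
        qed
      qed
      have a4: "\<forall>a. \<not> (PCb \<le> a \<and> a < PCb + fst s' 44) \<longrightarrow> snd s' a = M a" using h m Is unfolding I_def by auto
      have a5: "keep R (fst s') {37,38,42,44,45,46,47,49}" using h Is unfolding I_def keep_def by auto
      show "I s' \<and> fst s' 45 < fst s 45 \<and> t \<le> 15" unfolding I_def using a1 a2 a3 a4 a5 h nz by simp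
    qed
  qed
  show ?thesis
    unfolding popc_def
    apply (rule wp_Store_seq, rule wp_Const_seq, rule wp_Const_seq, rule wp_Sub_seq)
    apply (rule wp_while_rule[where I = I and \<mu> = "\<lambda>s. fst s 45" and b = 15])
    subgoal using assms by (auto simp: I_def keep_def intro: exI[of _ 0])
    subgoal by (rule step)
    subgoal for t s'
      using assms by (auto simp: I_def keep_def)
    done
qed

lemma wp_ifeq[simp]:
  assumes "a \<noteq> 37" "a \<noteq> 38" "b \<noteq> 37" "b \<noteq> 38"
  shows "wp (ifeq a b c) Q s = (if fst s a = fst s b then wp c (\<lambda>t. Q (t + 4)) ((fst s)(37 := 0, 38 := 0), snd s)
     else Q 5 ((fst s)(37 := fst s a - fst s b, 38 := fst s b - fst s a), snd s))"
proof -
  have e: "Suc (Suc (Suc (Suc 0))) = (4::nat)" "Suc (Suc (Suc (Suc (Suc 0)))) = (5::nat)"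
    "\<And>t. Suc (Suc (Suc (Suc t))) = t + (4::nat)" by simp_all
  show ?thesis using assms unfolding ifeq_def by (simp add: ac_simps e)
qed

lemma wp_IfT_seq: "fst s r \<noteq> 0 \<Longrightarrow> wp (Seq c1 c) (\<lambda>t. Q (t + 1)) s \<Longrightarrow> wp (Seq (If r c1 c2) c) Q s"
  by (simp add: ac_simps)
lemma wp_IfF_seq: "fst s r = 0 \<Longrightarrow> wp (Seq c2 c) (\<lambda>t. Q (t + 1)) s \<Longrightarrow> wp (Seq (If r c1 c2) c) Q s"
  by (simp add: ac_simps)

definition finbody :: com where
  "finbody = Seq (Sub 44 44 1) (Seq (Add 46 24 44) (Seq (Load 47 46) (Seq (Sub 48 3 47) (Seq (Add 46 21 44)
     (Seq (Load 47 46) (Seq (Sub 49 47 2) (If 48 Skip (If 49 Skip (Const 0 1)))))))))"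

definition final :: com where
  "final = Seq (Const 0 0) (Seq (Add 44 20 13) (While 44 finbody))"

lemma final_spec:
  assumes "R 20 = P" "R 24 = PCb" "R 21 = Ab" "R 3 = p" "R 2 = k" "R 13 = 0" "R 1 = 1"
  shows "wp final (\<lambda>t s'. (fst s' 0 \<noteq> 0 \<longleftrightarrow> (\<exists>U<P. p \<le> M (PCb + U) \<and> M (Ab + U) \<le> k)) \<and> t \<le> 12 * P + 15) (R,M)"
proof -
  define I where "I s \<longleftrightarrow> fst s 44 \<le> P \<and> (fst s 0 \<noteq> 0 \<longleftrightarrow> (\<exists>U. fst s 44 \<le> U \<and> U < P \<and> p \<le> M (PCb + U) \<and> M (Ab + U) \<le> k))
     \<and> keep R (fst s) {0,44,46,47,48,49} \<and> snd s = M" for s :: state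
  have step: "wp finbody (\<lambda>t s'. I s' \<and> fst s' 44 < fst s 44 \<and> t \<le> 11) s"
    if Is: "I s" and nz: "fst s 44 \<noteq> 0" for s
  proof -
    obtain U where U: "fst s 44 = Suc U" using nz not0_implies_Suc by blast
    have regs: "fst s 24 = PCb" "fst s 21 = Ab" "fst s 3 = p" "fst s 2 = k" "fst s 1 = 1" "snd s = M"
      using Is assms unfolding I_def keep_def by auto
    have UP: "U < P" using Is U unfolding I_def by simp
    have ex: "(\<exists>V. U \<le> V \<and> V < P \<and> p \<le> M (PCb + V) \<and> M (Ab + V) \<le> k) \<longleftrightarrow>
       ((p \<le> M (PCb + U) \<and> M (Ab + U) \<le> k) \<or> (\<exists>V. Suc U \<le> V \<and> V < P \<and> p \<le> M (PCb + V) \<and> M (Ab + V) \<le> k))"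
    proof
      assume "\<exists>V. U \<le> V \<and> V < P \<and> p \<le> M (PCb + V) \<and> M (Ab + V) \<le> k"
      then obtain V where V: "U \<le> V" "V < P" "p \<le> M (PCb + V)" "M (Ab + V) \<le> k" by blast
      show "(p \<le> M (PCb + U) \<and> M (Ab + U) \<le> k) \<or> (\<exists>V. Suc U \<le> V \<and> V < P \<and> p \<le> M (PCb + V) \<and> M (Ab + V) \<le> k)"
      proof (cases "V = U")
        case True then show ?thesis using V by simp
      next
        case False then have "Suc U \<le> V" using V by simp
        then show ?thesis using V by blast
      qed
    next
      assume "(p \<le> M (PCb + U) \<and> M (Ab + U) \<le> k) \<or> (\<exists>V. Suc U \<le> V \<and> V < P \<and> p \<le> M (PCb + V) \<and> M (Ab + V) \<le> k)"
      then show "\<exists>V. U \<le> V \<and> V < P \<and> p \<le> M (PCb + V) \<and> M (Ab + V) \<le> k"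
      proof
        assume "p \<le> M (PCb + U) \<and> M (Ab + U) \<le> k" then show ?thesis using UP by blast
      next
        assume "\<exists>V. Suc U \<le> V \<and> V < P \<and> p \<le> M (PCb + V) \<and> M (Ab + V) \<le> k"
        then obtain V where "Suc U \<le> V" "V < P" "p \<le> M (PCb + V)" "M (Ab + V) \<le> k" by blast
        then show ?thesis by (intro exI[of _ V]) simp
      qed
    qed
    have old: "fst s 0 \<noteq> 0 \<longleftrightarrow> (\<exists>V. Suc U \<le> V \<and> V < P \<and> p \<le> M (PCb + V) \<and> M (Ab + V) \<le> k)"
      using Is U unfolding I_def by simp
    have kp: "keep R (fst s) {0,44,46,47,48,49}" using Is unfolding I_def by simp
    show ?thesis using U regs ex old kp UP unfolding finbody_def I_def keep_def by auto
  qed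
  show ?thesis
    unfolding final_def
    apply (rule wp_Const_seq, rule wp_Add_seq)
    apply (rule wp_while_rule[where I = I and \<mu> = "\<lambda>s. fst s 44" and b = 11])
    subgoal using assms by (auto simp: I_def keep_def)
    subgoal by (rule step)
    subgoal for t s'
      using assms by (auto simp: I_def keep_def)
    done
qed

lemma arrOK_v: "arrOK phi N L M \<Longrightarrow> j < L \<Longrightarrow> M (N + 3 * j + 1) = fst (snd (lits phi ! j))"
  unfolding arrOK_def by blast
lemma arrOK_b: "arrOK phi N L M \<Longrightarrow> j < L \<Longrightarrow> M (N + 3 * j) = bcode (fst (lits phi ! j))"
  unfolding arrOK_def by blast
lemma arrOK_c: "arrOK phi N L M \<Longrightarrow> j < L \<Longrightarrow> M (N + 3 * j + 2) = snd (snd (lits phi ! j))"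
  unfolding arrOK_def by blast

definition fsbody :: com where
  "fsbody = Seq (Add 9 34 1) (Seq (Load 36 9) (Seq (ifeq 36 32 (Const 33 1)) (Seq (Add 34 34 1)
     (Seq (Add 34 34 1) (Seq (Add 34 34 1) (Sub 35 30 34))))))"

definition fscan :: com where
  "fscan = Seq (Const 33 0) (Seq (Add 34 10 13) (Seq (Sub 35 30 34) (While 35 fsbody)))"

lemma fsbody_post:
  assumes "fst s 1 = 1"
  shows "wp fsbody (\<lambda>t s'. fst s' 34 = Suc (Suc (Suc (fst s 34))) \<and> fst s' 35 = fst s 30 - Suc (Suc (Suc (fst s 34)))
    \<and> fst s' 33 = (if snd s (fst s 34 + 1) = fst s 32 then 1 else fst s 33)
    \<and> keep (fst s) (fst s') {9,33,34,35,36,37,38} \<and> snd s' = snd s \<and> t \<le> 11) s"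
  using assms unfolding fsbody_def by (simp add: keep_def)

lemma fscan_spec:
  assumes "R 30 = N + 3 * j" "R 10 = N" "R 32 = v" "R 13 = 0" "R 1 = 1" "arrOK phi N L M" "j \<le> L"
  shows "wp fscan (\<lambda>t s'. (fst s' 33 \<noteq> 0 \<longleftrightarrow> (\<exists>j'<j. fst (snd (lits phi ! j')) = v))
     \<and> keep R (fst s') {9,33,34,35,36,37,38} \<and> snd s' = M \<and> t \<le> 36 * j + 20) (R,M)"
proof -
  define I where "I s \<longleftrightarrow> (\<exists>j2\<le>j. fst s 34 = N + 3 * j2 \<and> fst s 35 = fst s 30 - fst s 34
     \<and> (fst s 33 \<noteq> 0 \<longleftrightarrow> (\<exists>j'<j2. fst (snd (lits phi ! j')) = v)))
     \<and> keep R (fst s) {9,33,34,35,36,37,38} \<and> snd s = M" for s :: state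
  have step: "wp fsbody (\<lambda>t s'. I s' \<and> fst s' 35 < fst s 35 \<and> t \<le> 11) s"
    if Is: "I s" and nz: "fst s 35 \<noteq> 0" for s
  proof -
    obtain j2 where j2: "j2 \<le> j" "fst s 34 = N + 3 * j2" "fst s 35 = fst s 30 - fst s 34"
      "fst s 33 \<noteq> 0 \<longleftrightarrow> (\<exists>j'<j2. fst (snd (lits phi ! j')) = v)" using Is unfolding I_def by blast
    have regs: "fst s 30 = N + 3 * j" "fst s 32 = v" "fst s 1 = 1" "snd s = M" "keep R (fst s) {9,33,34,35,36,37,38}"
      using Is assms unfolding I_def keep_def by auto
    have jj: "j2 < j" using j2 nz regs by simp
    have rd: "snd s (fst s 34 + 1) = fst (snd (lits phi ! j2))" using arrOK_v[OF assms(6), of j2] jj assms(7) j2 regs by simp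
    show ?thesis
    proof (rule wp_mono[OF fsbody_post[OF regs(3)]])
      fix t :: nat and s' :: state
      assume h: "fst s' 34 = Suc (Suc (Suc (fst s 34))) \<and> fst s' 35 = fst s 30 - Suc (Suc (Suc (fst s 34)))
        \<and> fst s' 33 = (if snd s (fst s 34 + 1) = fst s 32 then 1 else fst s 33)
        \<and> keep (fst s) (fst s') {9,33,34,35,36,37,38} \<and> snd s' = snd s \<and> t \<le> 11"
      have "fst s' 33 \<noteq> 0 \<longleftrightarrow> (\<exists>j'<Suc j2. fst (snd (lits phi ! j')) = v)"
        using h rd regs j2(4) by (auto simp: less_Suc_eq)
      moreover have "fst s' 34 = N + 3 * Suc j2" "fst s' 35 = fst s' 30 - fst s' 34" using h j2 unfolding keep_def by auto
      moreover have "keep R (fst s') {9,33,34,35,36,37,38}" using h regs unfolding keep_def by auto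
      moreover have "fst s' 35 < fst s 35" using h j2 jj regs by simp
      ultimately show "I s' \<and> fst s' 35 < fst s 35 \<and> t \<le> 11" unfolding I_def using h jj regs
        by (intro conjI exI[of _ "Suc j2"]) auto
    qed
  qed
  show ?thesis
    unfolding fscan_def
    apply (rule wp_Const_seq, rule wp_Add_seq, rule wp_Sub_seq)
    apply (rule wp_while_rule[where I = I and \<mu> = "\<lambda>s. fst s 35" and b = 11])
    subgoal using assms by (auto simp: I_def keep_def intro!: exI[of _ 0])
    subgoal by (rule step)
    subgoal for t s'
      using assms by (auto simp: I_def keep_def)
    done
qed

definition sact :: com where
  "sact = Seq (Add 9 34 1) (Seq (Add 9 9 1) (Seq (Load 41 9) (Seq (Load 36 34)
     (Seq (If 36 (Add 40 22 13) (Add 40 23 13)) force))))"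

definition sbody :: com where
  "sbody = Seq (Add 9 34 1) (Seq (Load 36 9) (Seq (ifeq 36 32 sact) (Seq (Add 34 34 1)
     (Seq (Add 34 34 1) (Seq (Add 34 34 1) (Sub 35 35 1))))))"

definition scanl :: com where
  "scanl = Seq (Add 34 10 13) (Seq (Add 35 8 13) (While 35 sbody))"

lemma sbody_ne:
  assumes "fst s 1 = 1" "snd s (fst s 34 + 1) \<noteq> fst s 32"
  shows "wp sbody (\<lambda>t s'. fst s' 34 = Suc (Suc (Suc (fst s 34))) \<and> fst s' 35 = fst s 35 - 1
     \<and> keep (fst s) (fst s') {9,34,35,36,37,38} \<and> snd s' = snd s \<and> t \<le> 11) s"
  using assms unfolding sbody_def by (simp add: keep_def)

lemma wp_ifeq_seqT:
  assumes "a \<noteq> 37" "a \<noteq> 38" "b \<noteq> 37" "b \<noteq> 38" "fst s a = fst s b"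
    "wp c P ((fst s)(37 := 0, 38 := 0), snd s)"
    "\<And>t s'. P t s' \<Longrightarrow> wp d (\<lambda>t2 s2. Q (t + 4 + t2) s2) s'"
  shows "wp (Seq (ifeq a b c) d) Q s"
  using assms by (auto elim!: wp_mono simp: ac_simps)

lemma sact_spec:
  assumes "R 1 = 1" "M (R 34) = bcode b" "M (R 34 + 2) = i" "i < m" "R 20 = 2^m" "R 22 = Bb" "R 23 = Cb"
    "R 25 = K" "R 13 = 0" "X = (if b then Bb else Cb)"
  shows "wp sact (\<lambda>t s'. keep R (fst s') {9,36,40,41,42,43,44,45,46,47,48,49}
     \<and> (\<forall>U<2^m. snd s' (X + U) = (if bit U i then min (M (X + U)) (M (X + (U - 2^i))) else K))
     \<and> (\<forall>a. \<not> (X \<le> a \<and> a < X + 2^m) \<longrightarrow> snd s' a = M a)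
     \<and> t \<le> 3 * m + 14 * 2^m + 32) (R,M)"
proof -
  have F: "wp force (\<lambda>t s'. (\<forall>U<2^m. snd s' (X + U) = (if bit U i then min (M (X + U)) (M (X + (U - 2^i))) else K))
     \<and> (\<forall>a. \<not> (X \<le> a \<and> a < X + 2^m) \<longrightarrow> snd s' a = M a) \<and> keep R1 (fst s') {42,43,44,45,46,47,48,49}
     \<and> t \<le> 3 * i + 14 * 2^m + 25) (R1, M)"
    if "R1 40 = X" "R1 41 = i" "R1 20 = 2^m" "R1 25 = K" "R1 13 = 0" "R1 1 = 1" for R1
    by (rule force_spec) (use assms that in simp_all)
  have i3: "3 * i \<le> 3 * m" using assms by simp
  have m2: "M (R 34 + 1 + 1) = i" using assms(3) by (simp add: add.assoc)
  show ?thesis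
    unfolding sact_def
    apply (rule wp_Add_seq, rule wp_Add_seq, rule wp_Load_seq, rule wp_Load_seq)
    apply (simp only: fst_conv snd_conv)
    apply (cases b)
    subgoal
      apply (rule wp_IfT_seq)
      using assms apply (simp add: bcode_def)
      apply (rule wp_Add_seq)
      apply (simp only: fst_conv snd_conv)
      apply (rule wp_mono[OF F])
      using assms m2 i3 apply (simp_all add: keep_def)
      done
    subgoal
      apply (rule wp_IfF_seq)
      using assms apply (simp add: bcode_def)
      apply (rule wp_Add_seq)
      apply (simp only: fst_conv snd_conv)
      apply (rule wp_mono[OF F])
      using assms m2 i3 apply (simp_all add: keep_def)
      done
    done
qed

lemma sbody_eq:
  assumes "fst s 1 = 1" "snd s (fst s 34 + 1) = fst s 32" "snd s (fst s 34) = bcode b"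
    "snd s (fst s 34 + 2) = i" "i < m" "fst s 20 = 2^m" "fst s 22 = Bb" "fst s 23 = Cb"
    "fst s 25 = K" "fst s 13 = 0" "X = (if b then Bb else Cb)"
  shows "wp sbody (\<lambda>t s'. fst s' 34 = Suc (Suc (Suc (fst s 34))) \<and> fst s' 35 = fst s 35 - 1
     \<and> keep (fst s) (fst s') {9,34,35,36,37,38,40,41,42,43,44,45,46,47,48,49}
     \<and> (\<forall>U<2^m. snd s' (X + U) = (if bit U i then min (snd s (X + U)) (snd s (X + (U - 2^i))) else K))
     \<and> (\<forall>a. \<not> (X \<le> a \<and> a < X + 2^m) \<longrightarrow> snd s' a = snd s a)
     \<and> t \<le> 3 * m + 14 * 2^m + 45) s"
  unfolding sbody_def
  apply (rule wp_Add_seq, rule wp_Load_seq)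
  apply (simp only: fst_conv snd_conv)
  apply (rule wp_ifeq_seqT[OF _ _ _ _ _ sact_spec[where b = b and i = i and m = m and Bb = Bb and Cb = Cb and K = K and X = X]])
  using assms apply (simp_all add: keep_def)
  done

definition Zs :: "cnf \<Rightarrow> nat \<Rightarrow> bool \<Rightarrow> nat \<Rightarrow> nat set" where
  "Zs phi v b j = {i. \<exists>j'<j. lits phi ! j' = (b, v, i)}"

lemma Zs_0[simp]: "Zs phi v b 0 = {}" unfolding Zs_def by simp

lemma Zs_Suc: "Zs phi v b (Suc j) = (if fst (lits phi ! j) = b \<and> fst (snd (lits phi ! j)) = v
    then insert (snd (snd (lits phi ! j))) (Zs phi v b j) else Zs phi v b j)"
  unfolding Zs_def by (cases "lits phi ! j") (auto simp: less_Suc_eq)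

lemma lits_bound: "j < length (lits phi) \<Longrightarrow> snd (snd (lits phi ! j)) < length phi"
  using set_lits[of "lits phi ! j" phi] nth_mem[of j "lits phi"] by (auto split: prod.splits)

lemma Zs_sub: "j \<le> length (lits phi) \<Longrightarrow> Zs phi v b j \<subseteq> {..<length phi}"
proof
  fix x assume j: "j \<le> length (lits phi)" and "x \<in> Zs phi v b j"
  then obtain j' where "j' < j" "lits phi ! j' = (b, v, x)" unfolding Zs_def by blast
  then show "x \<in> {..<length phi}" using lits_bound[of j' phi] j by simp
qed

lemma Zs_L: "Zs phi v b (length (lits phi)) = PosS phi v b"
  unfolding Zs_def PosS_def
proof (intro set_eqI iffI; simp)
  fix i assume "\<exists>j'<length (lits phi). lits phi ! j' = (b, v, i)"
  then have "(b, v, i) \<in> set (lits phi)" by (metis nth_mem)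
  then show "i < length phi \<and> (b, v) \<in> set (phi ! i)" using set_lits by auto
next
  fix i assume "i < length phi \<and> (b, v) \<in> set (phi ! i)"
  then have "(b, v, i) \<in> set (lits phi)" using set_lits by auto
  then show "\<exists>j'<length (lits phi). lits phi ! j' = (b, v, i)" by (metis in_set_conv_nth)
qed

lemma forcedT_cong: "forcedT m k F Z G \<Longrightarrow> (\<forall>U<2^m. G' U = G U) \<Longrightarrow> forcedT m k F Z G'"
  unfolding forcedT_def by simp

lemma scanl_spec:
  assumes "R 10 = N" "R 8 = length (lits phi)" "R 32 = v" "R 20 = 2^length phi" "R 22 = Bb" "R 23 = Cb"
    "R 25 = Suc k" "R 13 = 0" "R 1 = 1" "arrOK phi N (length (lits phi)) M" "N + 3 * length (lits phi) \<le> Bb"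
    "Bb + 2^length phi \<le> Cb"
    "forcedT (length phi) k F {} (\<lambda>U. M (Bb + U))" "forcedT (length phi) k F {} (\<lambda>U. M (Cb + U))"
  shows "wp scanl (\<lambda>t s'. forcedT (length phi) k F (PosS phi v True) (\<lambda>U. snd s' (Bb + U))
     \<and> forcedT (length phi) k F (PosS phi v False) (\<lambda>U. snd s' (Cb + U))
     \<and> (\<forall>a. \<not> (Bb \<le> a \<and> a < Bb + 2^length phi) \<and> \<not> (Cb \<le> a \<and> a < Cb + 2^length phi) \<longrightarrow> snd s' a = M a)
     \<and> keep R (fst s') {9,34,35,36,37,38,40,41,42,43,44,45,46,47,48,49}
     \<and> t \<le> (length (lits phi) + 1) * (3 * length phi + 14 * 2^length phi + 45 + 1) + 2) (R,M)"
proof -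
  let ?L = "length (lits phi)"
  let ?m = "length phi"
  let ?P = "2^length phi :: nat"
  let ?S = "{9,34,35,36,37,38,40,41,42,43,44,45,46,47,48,49} :: nat set"
  define I where "I s \<longleftrightarrow> (\<exists>j2 \<le> ?L. fst s 34 = N + 3 * j2 \<and> fst s 35 = ?L - j2
     \<and> forcedT ?m k F (Zs phi v True j2) (\<lambda>U. snd s (Bb + U)) \<and> forcedT ?m k F (Zs phi v False j2) (\<lambda>U. snd s (Cb + U)))
     \<and> (\<forall>a. \<not> (Bb \<le> a \<and> a < Bb + ?P) \<and> \<not> (Cb \<le> a \<and> a < Cb + ?P) \<longrightarrow> snd s a = M a)
     \<and> keep R (fst s) ?S" for s :: state
  have step: "wp sbody (\<lambda>t s'. I s' \<and> fst s' 35 < fst s 35 \<and> t \<le> 3 * ?m + 14 * ?P + 45) s"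
    if Is: "I s" and nz: "fst s 35 \<noteq> 0" for s
  proof -
    obtain j2 where j2: "j2 \<le> ?L" "fst s 34 = N + 3 * j2" "fst s 35 = ?L - j2"
      "forcedT ?m k F (Zs phi v True j2) (\<lambda>U. snd s (Bb + U))" "forcedT ?m k F (Zs phi v False j2) (\<lambda>U. snd s (Cb + U))"
      using Is unfolding I_def by blast
    have fr: "\<forall>a. \<not> (Bb \<le> a \<and> a < Bb + ?P) \<and> \<not> (Cb \<le> a \<and> a < Cb + ?P) \<longrightarrow> snd s a = M a"
      and kp: "keep R (fst s) ?S" using Is unfolding I_def by auto
    have jL: "j2 < ?L" using j2 nz by simp
    obtain b w i where e: "lits phi ! j2 = (b, w, i)" by (cases "lits phi ! j2") auto
    have im: "i < ?m" using lits_bound[OF jL] e by simp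
    have arr: "a < N + 3 * ?L \<Longrightarrow> snd s a = M a" for a using fr assms(11) assms(12) by auto
    have rd: "snd s (fst s 34) = bcode b" "snd s (fst s 34 + 1) = w" "snd s (fst s 34 + 2) = i"
      using arrOK_b[OF assms(10) jL] arrOK_v[OF assms(10) jL] arrOK_c[OF assms(10) jL] e j2(2) jL arr
      by (auto simp: add.assoc)
    have regs: "fst s 1 = 1" "fst s 32 = v" "fst s 20 = ?P" "fst s 22 = Bb" "fst s 23 = Cb" "fst s 25 = Suc k"
      "fst s 13 = 0" using kp assms unfolding keep_def by auto
    show ?thesis
    proof (cases "w = v")
      case False
      have zs: "Zs phi v b' (Suc j2) = Zs phi v b' j2" for b' using Zs_Suc[of phi v b' j2] e False by simp
      show ?thesis
      proof (rule wp_mono[OF sbody_ne])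
        show "fst s 1 = 1" "snd s (fst s 34 + 1) \<noteq> fst s 32" using regs rd False by auto
      next
        fix t :: nat and s' :: state
        assume h: "fst s' 34 = Suc (Suc (Suc (fst s 34))) \<and> fst s' 35 = fst s 35 - 1
          \<and> keep (fst s) (fst s') {9,34,35,36,37,38} \<and> snd s' = snd s \<and> t \<le> 11"
        have "I s'" unfolding I_def
        proof (intro conjI exI[of _ "Suc j2"])
          show "Suc j2 \<le> ?L" using jL by simp
          show "fst s' 34 = N + 3 * Suc j2" "fst s' 35 = ?L - Suc j2" using h j2 by auto
          show "forcedT ?m k F (Zs phi v True (Suc j2)) (\<lambda>U. snd s' (Bb + U))"
               "forcedT ?m k F (Zs phi v False (Suc j2)) (\<lambda>U. snd s' (Cb + U))" using h j2 zs by auto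
          show "\<forall>a. \<not> (Bb \<le> a \<and> a < Bb + ?P) \<and> \<not> (Cb \<le> a \<and> a < Cb + ?P) \<longrightarrow> snd s' a = M a" using h fr by simp
          show "keep R (fst s') ?S" using h kp unfolding keep_def by auto
        qed
        then show "I s' \<and> fst s' 35 < fst s 35 \<and> t \<le> 3 * ?m + 14 * ?P + 45" using h nz by simp
      qed
    next
      case True
      let ?X = "if b then Bb else Cb"
      show ?thesis
      proof (rule wp_mono[OF sbody_eq[where b = b and i = i and m = ?m and Bb = Bb and Cb = Cb and K = "Suc k" and X = ?X]])
        show "fst s 1 = 1" "snd s (fst s 34 + 1) = fst s 32" "snd s (fst s 34) = bcode b" "snd s (fst s 34 + 2) = i"
          "i < ?m" "fst s 20 = ?P" "fst s 22 = Bb" "fst s 23 = Cb" "fst s 25 = Suc k" "fst s 13 = 0"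
          using regs rd True im by auto
      next
        fix t :: nat and s' :: state
        assume h: "fst s' 34 = Suc (Suc (Suc (fst s 34))) \<and> fst s' 35 = fst s 35 - 1
          \<and> keep (fst s) (fst s') {9,34,35,36,37,38,40,41,42,43,44,45,46,47,48,49}
          \<and> (\<forall>U<2^?m. snd s' (?X + U) = (if bit U i then min (snd s (?X + U)) (snd s (?X + (U - 2^i))) else Suc k))
          \<and> (\<forall>a. \<not> (?X \<le> a \<and> a < ?X + 2^?m) \<longrightarrow> snd s' a = snd s a)
          \<and> t \<le> 3 * ?m + 14 * 2^?m + 45"
        have zsT: "Zs phi v b (Suc j2) = insert i (Zs phi v b j2)" using Zs_Suc[of phi v b j2] e True by simp
        have zsF: "Zs phi v (\<not> b) (Suc j2) = Zs phi v (\<not> b) j2" using Zs_Suc[of phi v "\<not> b" j2] e by simp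
        have subs: "Zs phi v b' j2 \<subseteq> {..<?m}" for b' using Zs_sub j2(1) by blast
        have tabs: "forcedT ?m k F (Zs phi v True (Suc j2)) (\<lambda>U. snd s' (Bb + U))
             \<and> forcedT ?m k F (Zs phi v False (Suc j2)) (\<lambda>U. snd s' (Cb + U))"
        proof (cases b)
          case bT: True
          have n1: "forcedT ?m k F (insert i (Zs phi v True j2))
              (\<lambda>U. if bit U i then min (snd s (Bb + U)) (snd s (Bb + (U - 2^i))) else Suc k)"
            by (rule forcedT_step[OF j2(4) im subs])
          have n2: "\<forall>U<?P. snd s' (Cb + U) = snd s (Cb + U)" using h bT assms(12) by auto
          show ?thesis using n1 n2 h bT zsT zsF j2(5)
            by (auto intro: forcedT_cong)
        next
          case bF: False
          have n1: "forcedT ?m k F (insert i (Zs phi v False j2))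
              (\<lambda>U. if bit U i then min (snd s (Cb + U)) (snd s (Cb + (U - 2^i))) else Suc k)"
            by (rule forcedT_step[OF j2(5) im subs])
          have n2: "\<forall>U<?P. snd s' (Bb + U) = snd s (Bb + U)" using h bF assms(12) by auto
          show ?thesis using n1 n2 h bF zsT zsF j2(4)
            by (auto intro: forcedT_cong)
        qed
        have "I s'" unfolding I_def
        proof (intro conjI exI[of _ "Suc j2"])
          show "Suc j2 \<le> ?L" using jL by simp
          show "fst s' 34 = N + 3 * Suc j2" "fst s' 35 = ?L - Suc j2" using h j2 by auto
          show "forcedT ?m k F (Zs phi v True (Suc j2)) (\<lambda>U. snd s' (Bb + U))"
               "forcedT ?m k F (Zs phi v False (Suc j2)) (\<lambda>U. snd s' (Cb + U))" using tabs by auto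
          show "\<forall>a. \<not> (Bb \<le> a \<and> a < Bb + ?P) \<and> \<not> (Cb \<le> a \<and> a < Cb + ?P) \<longrightarrow> snd s' a = M a"
            using h fr by (cases b) auto
          show "keep R (fst s') ?S" using h kp unfolding keep_def by auto
        qed
        then show "I s' \<and> fst s' 35 < fst s 35 \<and> t \<le> 3 * ?m + 14 * ?P + 45" using h nz by simp
      qed simp
    qed
  qed
  show ?thesis
    unfolding scanl_def
    apply (rule wp_Add_seq, rule wp_Add_seq)
    apply (rule wp_while_rule[where I = I and \<mu> = "\<lambda>s. fst s 35" and b = "3 * ?m + 14 * ?P + 45"])
    subgoal using assms by (auto simp: I_def keep_def intro!: exI[of _ 0])
    subgoal by (rule step)
    subgoal for t s'
      using assms by (auto simp: I_def keep_def Zs_L)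
    done
qed

definition dpstep :: com where "dpstep = Seq copyl (Seq scanl combl)"

lemma dpstep_spec:
  assumes "R 10 = N" "R 8 = length (lits phi)" "R 32 = v" "R 20 = 2^length phi" "R 21 = Ab" "R 22 = Bb" "R 23 = Cb"
    "R 25 = Suc k" "R 13 = 0" "R 1 = 1" "arrOK phi N (length (lits phi)) M" "Ab = N + 3 * length (lits phi)"
    "Bb = Ab + 2^length phi" "Cb = Bb + 2^length phi"
    "goodT phi k W (\<lambda>U. M (Ab + U))" "v \<notin> W" "finite W"
  shows "wp dpstep (\<lambda>t s'. goodT phi k (insert v W) (\<lambda>U. snd s' (Ab + U))
     \<and> (\<forall>a. a < Ab \<longrightarrow> snd s' a = M a) \<and> keep R (fst s') {9,34,35,36,37,38,40,41,42,43,44,45,46,47,48,49}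
     \<and> t \<le> 8 * 2^length phi + 9 + ((length (lits phi) + 1) * (3 * length phi + 14 * 2^length phi + 45 + 1) + 2)
       + (13 * 2^length phi + 14)) (R,M)"
proof -
  let ?P = "2^length phi :: nat"
  let ?m = "length phi"
  let ?A = "\<lambda>U. M (Ab + U)"
  have Ale: "\<forall>U<?P. ?A U \<le> Suc k" using assms(15) unfolding goodT_def by auto
  show ?thesis
    unfolding dpstep_def
  proof (rule wp_seqI[OF copyl_spec[of R ?P Ab Bb Cb M]])
    show "R 20 = ?P" "R 21 = Ab" "R 22 = Bb" "R 23 = Cb" "R 13 = 0" "R 1 = 1" "Ab + ?P \<le> Bb" "Bb + ?P \<le> Cb"
      using assms by auto
  next
    fix t1 s1 assume h1: "(\<forall>U<?P. snd s1 (Bb + U) = M (Ab + U) \<and> snd s1 (Cb + U) = M (Ab + U))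
     \<and> (\<forall>a. \<not> (Bb \<le> a \<and> a < Bb + ?P) \<and> \<not> (Cb \<le> a \<and> a < Cb + ?P) \<longrightarrow> snd s1 a = M a)
     \<and> keep R (fst s1) {44,46,47} \<and> t1 \<le> 8 * ?P + 9"
    have r1: "fst s1 r = R r" if "r \<notin> {44,46,47}" for r using h1 that unfolding keep_def by auto
    have A1: "\<forall>U<?P. snd s1 (Ab + U) = ?A U" using h1 assms by auto
    have arr1: "arrOK phi N (length (lits phi)) (snd s1)"
      using assms(11) h1 assms(12,13,14) unfolding arrOK_def by auto
    have fB: "forcedT ?m k ?A {} (\<lambda>U. snd s1 (Bb + U))"
      by (rule forcedT_cong[OF forcedT_init[OF Ale]]) (use h1 in auto)
    have fC: "forcedT ?m k ?A {} (\<lambda>U. snd s1 (Cb + U))"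
      by (rule forcedT_cong[OF forcedT_init[OF Ale]]) (use h1 in auto)
    show "wp (Seq scanl combl) (\<lambda>t2 s2. goodT phi k (insert v W) (\<lambda>U. snd s2 (Ab + U))
     \<and> (\<forall>a. a < Ab \<longrightarrow> snd s2 a = M a) \<and> keep R (fst s2) {9,34,35,36,37,38,40,41,42,43,44,45,46,47,48,49}
     \<and> t1 + t2 \<le> 8 * 2^length phi + 9 + ((length (lits phi) + 1) * (3 * length phi + 14 * 2^length phi + 45 + 1) + 2)
       + (13 * 2^length phi + 14)) s1"
    proof (rule wp_pair, rule wp_seqI[OF scanl_spec[of "fst s1" N phi v Bb Cb k "snd s1" ?A]])
      show "fst s1 10 = N" "fst s1 8 = length (lits phi)" "fst s1 32 = v" "fst s1 20 = ?P" "fst s1 22 = Bb"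
        "fst s1 23 = Cb" "fst s1 25 = Suc k" "fst s1 13 = 0" "fst s1 1 = 1"
        using r1 assms by auto
      show "arrOK phi N (length (lits phi)) (snd s1)" by (rule arr1)
      show "N + 3 * length (lits phi) \<le> Bb" "Bb + ?P \<le> Cb" using assms by auto
      show "forcedT ?m k ?A {} (\<lambda>U. snd s1 (Bb + U))" "forcedT ?m k ?A {} (\<lambda>U. snd s1 (Cb + U))" by (fact fB, fact fC)
    next
      fix t2 s2 assume h2: "forcedT ?m k ?A (PosS phi v True) (\<lambda>U. snd s2 (Bb + U))
     \<and> forcedT ?m k ?A (PosS phi v False) (\<lambda>U. snd s2 (Cb + U))
     \<and> (\<forall>a. \<not> (Bb \<le> a \<and> a < Bb + ?P) \<and> \<not> (Cb \<le> a \<and> a < Cb + ?P) \<longrightarrow> snd s2 a = snd s1 a)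
     \<and> keep (fst s1) (fst s2) {9,34,35,36,37,38,40,41,42,43,44,45,46,47,48,49}
     \<and> t2 \<le> (length (lits phi) + 1) * (3 * length phi + 14 * 2^length phi + 45 + 1) + 2"
      have r2: "fst s2 r = R r" if "r \<notin> {9,34,35,36,37,38,40,41,42,43,44,45,46,47,48,49}" for r
        using h2 r1 that unfolding keep_def by auto
      show "wp combl (\<lambda>t3 s3. goodT phi k (insert v W) (\<lambda>U. snd s3 (Ab + U))
       \<and> (\<forall>a. a < Ab \<longrightarrow> snd s3 a = M a) \<and> keep R (fst s3) {9,34,35,36,37,38,40,41,42,43,44,45,46,47,48,49}
       \<and> t1 + (t2 + t3) \<le> 8 * 2^length phi + 9 + ((length (lits phi) + 1) * (3 * length phi + 14 * 2^length phi + 45 + 1) + 2)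
         + (13 * 2^length phi + 14)) s2"
      proof (rule wp_pair, rule wp_mono[OF combl_spec[of "fst s2" ?P Ab Bb Cb "Suc k" "snd s2"]])
        show "fst s2 20 = ?P" "fst s2 21 = Ab" "fst s2 22 = Bb" "fst s2 23 = Cb" "fst s2 13 = 0" "fst s2 1 = 1"
          "fst s2 25 = Suc k" "Ab + ?P \<le> Bb" "Bb + ?P \<le> Cb" using r2 assms by auto
      next
        fix t3 s3 assume h3: "(\<forall>U<?P. snd s3 (Ab + U) = min (min (snd s2 (Bb + U) + 1) (Suc k)) (snd s2 (Cb + U)))
          \<and> (\<forall>a. \<not> (Ab \<le> a \<and> a < Ab + ?P) \<longrightarrow> snd s3 a = snd s2 a)
          \<and> keep (fst s2) (fst s3) {44,46,47,48,49} \<and> t3 \<le> 13 * ?P + 14"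
        have g: "goodT phi k (insert v W) (\<lambda>U. min (min (snd s2 (Bb + U) + 1) (Suc k)) (snd s2 (Cb + U)))"
          by (rule goodT_step[OF assms(15)]) (use h2 assms in auto)
        have "goodT phi k (insert v W) (\<lambda>U. snd s3 (Ab + U))"
          using g h3 unfolding goodT_def by auto
        moreover have "\<forall>a. a < Ab \<longrightarrow> snd s3 a = M a" using h3 h2 h1 assms(12,13,14) by auto
        moreover have "keep R (fst s3) {9,34,35,36,37,38,40,41,42,43,44,45,46,47,48,49}"
          using h3 r2 unfolding keep_def by auto
        moreover have "t1 + (t2 + t3) \<le> 8 * 2^length phi + 9 + ((length (lits phi) + 1) * (3 * length phi + 14 * 2^length phi + 45 + 1) + 2)
         + (13 * 2^length phi + 14)"
          using conjunct2[OF conjunct2[OF conjunct2[OF h1]]] conjunct2[OF conjunct2[OF conjunct2[OF conjunct2[OF h2]]]]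
            conjunct2[OF conjunct2[OF conjunct2[OF h3]]] by linarith
        ultimately show "goodT phi k (insert v W) (\<lambda>U. snd s3 (Ab + U))
       \<and> (\<forall>a. a < Ab \<longrightarrow> snd s3 a = M a) \<and> keep R (fst s3) {9,34,35,36,37,38,40,41,42,43,44,45,46,47,48,49}
       \<and> t1 + (t2 + t3) \<le> 8 * 2^length phi + 9 + ((length (lits phi) + 1) * (3 * length phi + 14 * 2^length phi + 45 + 1) + 2)
         + (13 * 2^length phi + 14)" by blast
      qed
    qed
  qed
qed

definition mbody :: com where
  "mbody = Seq (Add 9 30 1) (Seq (Load 32 9) (Seq fscan (Seq (If 33 Skip dpstep) (Seq (Add 30 30 1)
     (Seq (Add 30 30 1) (Seq (Add 30 30 1) (Sub 31 31 1)))))))"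

definition mainl :: com where
  "mainl = Seq (Add 30 10 13) (Seq (Add 31 8 13) (While 31 mbody))"

definition Wj :: "cnf \<Rightarrow> nat \<Rightarrow> nat set" where
  "Wj phi j = (\<lambda>j'. fst (snd (lits phi ! j'))) ` {..<j}"

lemma Wj_Suc: "Wj phi (Suc j) = insert (fst (snd (lits phi ! j))) (Wj phi j)"
  unfolding Wj_def by (auto simp: lessThan_Suc)

lemma Wj_L: "Wj phi (length (lits phi)) = Vars phi"
proof (intro set_eqI iffI)
  fix x assume "x \<in> Wj phi (length (lits phi))"
  then obtain j where j: "j < length (lits phi)" "x = fst (snd (lits phi ! j))" unfolding Wj_def by auto
  obtain b v i where e: "lits phi ! j = (b, v, i)" by (cases "lits phi ! j") auto
  have "(b, v, i) \<in> set (lits phi)" using j(1) e by (metis nth_mem)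
  then show "x \<in> Vars phi" unfolding Vars_def using j e by auto
next
  fix x assume "x \<in> Vars phi"
  then obtain b i where "(b, x, i) \<in> set (lits phi)" unfolding Vars_def by blast
  then obtain j where j: "j < length (lits phi)" "lits phi ! j = (b, x, i)" by (metis in_set_conv_nth)
  then show "x \<in> Wj phi (length (lits phi))" unfolding Wj_def by (intro image_eqI[of _ _ j]) auto
qed

lemma Wj_mem: "v \<in> Wj phi j \<longleftrightarrow> (\<exists>j'<j. fst (snd (lits phi ! j')) = v)"
  unfolding Wj_def by auto

lemma finite_Wj: "finite (Wj phi j)" unfolding Wj_def by simp

lemma wp_Skip_seq: "wp c (\<lambda>t. Q (1 + t)) s \<Longrightarrow> wp (Seq Skip c) Q s" by simp

lemma rest_rule:
  assumes "fst s 1 = 1" "Q 4 ((fst s)(30 := fst s 30 + 3, 31 := fst s 31 - 1), snd s)"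
  shows "wp (Seq (Add 30 30 1) (Seq (Add 30 30 1) (Seq (Add 30 30 1) (Sub 31 31 1)))) Q s"
proof -
  have e: "Suc (Suc (Suc (Suc 0))) = (4::nat)" "Suc (Suc (Suc x)) = x + (3::nat)" for x by simp_all
  show ?thesis using assms by (simp add: e fun_upd_twist)
qed

lemma mainl_spec:
  fixes phi :: cnf
  defines "L \<equiv> length (lits phi)" and "P \<equiv> 2 ^ length phi"
  defines "DT \<equiv> 8 * P + 9 + ((L + 1) * (3 * length phi + 14 * P + 45 + 1) + 2) + (13 * P + 14)"
  assumes "R 10 = N" "R 8 = L" "R 20 = P" "R 21 = Ab" "R 22 = Bb" "R 23 = Cb"
    "R 25 = Suc k" "R 13 = 0" "R 1 = 1" "arrOK phi N L M" "Ab = N + 3 * L"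
    "Bb = Ab + P" "Cb = Bb + P" "goodT phi k {} (\<lambda>U. M (Ab + U))"
  shows "wp mainl (\<lambda>t s'. goodT phi k (Vars phi) (\<lambda>U. snd s' (Ab + U))
     \<and> (\<forall>a. a < Ab \<longrightarrow> snd s' a = M a) \<and> keep R (fst s') {9,30,31,32,33,34,35,36,37,38,40,41,42,43,44,45,46,47,48,49}
     \<and> t \<le> (L + 1) * (36 * L + 30 + DT + 1) + 2) (R,M)"
proof -
  let ?S = "{9,30,31,32,33,34,35,36,37,38,40,41,42,43,44,45,46,47,48,49} :: nat set"
  define I where "I s \<longleftrightarrow> (\<exists>j \<le> L. fst s 30 = N + 3 * j \<and> fst s 31 = L - j
     \<and> goodT phi k (Wj phi j) (\<lambda>U. snd s (Ab + U)))
     \<and> (\<forall>a. a < Ab \<longrightarrow> snd s a = M a) \<and> keep R (fst s) ?S" for s :: state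
  have step: "wp mbody (\<lambda>t s'. I s' \<and> fst s' 31 < fst s 31 \<and> t \<le> 36 * L + 30 + DT) s"
    if Is: "I s" and nz: "fst s 31 \<noteq> 0" for s
  proof -
    obtain j where j: "j \<le> L" "fst s 30 = N + 3 * j" "fst s 31 = L - j" "goodT phi k (Wj phi j) (\<lambda>U. snd s (Ab + U))"
      using Is unfolding I_def by blast
    have fr: "\<forall>a. a < Ab \<longrightarrow> snd s a = M a" and kp: "keep R (fst s) ?S" using Is unfolding I_def by auto
    have regs: "fst s r = R r" if "r \<notin> ?S" for r using kp that unfolding keep_def by auto
    have jL: "j < L" using j nz by simp
    have arr: "arrOK phi N L (snd s)" using assms(13) fr assms(14) unfolding arrOK_def by auto
    let ?v = "fst (snd (lits phi ! j))"
    have rdv: "snd s (fst s 30 + fst s 1) = ?v" using arrOK_v[OF arr jL] j regs assms by simp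
    have FS: "wp fscan (\<lambda>t s'. (fst s' 33 \<noteq> 0 \<longleftrightarrow> (\<exists>j'<j. fst (snd (lits phi ! j')) = ?v))
       \<and> keep R1 (fst s') {9,33,34,35,36,37,38} \<and> snd s' = snd s \<and> t \<le> 36 * j + 20) (R1, snd s)"
      if "R1 30 = N + 3 * j" "R1 10 = N" "R1 32 = ?v" "R1 13 = 0" "R1 1 = 1" for R1
      by (rule fscan_spec[OF that arr j(1)])
    have DS: "wp dpstep (\<lambda>t s'. goodT phi k (insert ?v (Wj phi j)) (\<lambda>U. snd s' (Ab + U))
       \<and> (\<forall>a. a < Ab \<longrightarrow> snd s' a = snd s a) \<and> keep R1 (fst s') {9,34,35,36,37,38,40,41,42,43,44,45,46,47,48,49}
       \<and> t \<le> DT) (R1, M1)"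
      if "M1 = snd s" "R1 10 = N" "R1 8 = L" "R1 32 = ?v" "R1 20 = P" "R1 21 = Ab" "R1 22 = Bb" "R1 23 = Cb"
        "R1 25 = Suc k" "R1 13 = 0" "R1 1 = 1" "?v \<notin> Wj phi j" for R1 M1
      unfolding DT_def L_def P_def that(1)
      by (rule dpstep_spec) (use that arr j(4) finite_Wj assms in \<open>simp_all add: L_def P_def\<close>)
    have tj: "36 * j + 20 \<le> 36 * L + 20" using j by simp
    show ?thesis
      unfolding mbody_def
      apply (rule wp_Add_seq, rule wp_Load_seq)
      apply (simp only: fst_conv snd_conv)
      apply (rule wp_seqI[OF FS])
      using j regs assms rdv apply (simp_all)[5]
      subgoal for t1 s1
        apply (cases "fst s1 33 = 0")
        subgoal
          apply (rule wp_IfF_seq, assumption)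
          apply (rule wp_pair)
          apply (rule wp_seqI[OF DS])
          using regs assms rdv apply (simp_all add: keep_def Wj_mem)[12]
          subgoal premises prems for t2 s2
          proof (rule rest_rule)
            have f1: "keep (fst s) (fst s1) {9,32,33,34,35,36,37,38}" "snd s1 = snd s" "t1 \<le> 36 * j + 20"
              using prems(1) unfolding keep_def by auto
            have f2: "goodT phi k (insert ?v (Wj phi j)) (\<lambda>U. snd s2 (Ab + U))"
              "\<forall>a. a < Ab \<longrightarrow> snd s2 a = snd s a" "keep (fst s1) (fst s2) {9,34,35,36,37,38,40,41,42,43,44,45,46,47,48,49}"
              "t2 \<le> DT" using prems(3) by auto
            have r2: "fst s2 r = fst s r" if "r \<notin> {9,32,33,34,35,36,37,38,40,41,42,43,44,45,46,47,48,49}" for r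
              using f1 f2 that unfolding keep_def by auto
            show "fst s2 1 = 1" using r2[of 1] regs[of 1] assms by simp
            have "I ((fst s2)(30 := fst s2 30 + 3, 31 := fst s2 31 - 1), snd s2)"
              unfolding I_def
            proof (intro conjI exI[of _ "Suc j"])
              show "Suc j \<le> L" using jL by simp
              show "fst ((fst s2)(30 := fst s2 30 + 3, 31 := fst s2 31 - 1), snd s2) 30 = N + 3 * Suc j"
                "fst ((fst s2)(30 := fst s2 30 + 3, 31 := fst s2 31 - 1), snd s2) 31 = L - Suc j"
                using r2[of 30] r2[of 31] j by simp_all
              show "goodT phi k (Wj phi (Suc j)) (\<lambda>U. snd ((fst s2)(30 := fst s2 30 + 3, 31 := fst s2 31 - 1), snd s2) (Ab + U))"
                using f2(1) by (simp add: Wj_Suc)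
              show "\<forall>a. a < Ab \<longrightarrow> snd ((fst s2)(30 := fst s2 30 + 3, 31 := fst s2 31 - 1), snd s2) a = M a"
                using f2(2) fr by simp
              show "keep R (fst ((fst s2)(30 := fst s2 30 + 3, 31 := fst s2 31 - 1), snd s2)) ?S"
                using r2 regs unfolding keep_def by simp
            qed
            moreover have "fst s2 31 - 1 < fst s 31" using r2[of 31] nz by simp
            moreover have "1 + (1 + (t1 + (t2 + 4 + 1))) \<le> 36 * L + 30 + DT" using f1(3) f2(4) tj by linarith
            ultimately show "I ((fst s2)(30 := fst s2 30 + 3, 31 := fst s2 31 - 1), snd s2) \<and>
              fst ((fst s2)(30 := fst s2 30 + 3, 31 := fst s2 31 - 1), snd s2) 31 < fst s 31 \<and>
              1 + (1 + (t1 + (t2 + 4 + 1))) \<le> 36 * L + 30 + DT" by simp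
          qed
          done
        subgoal premises prems
          apply (rule wp_IfT_seq)
          using prems(2) apply simp
          apply (rule wp_Skip_seq)
        proof (rule rest_rule)
          have f1: "keep (fst s) (fst s1) {9,32,33,34,35,36,37,38}" "snd s1 = snd s" "t1 \<le> 36 * j + 20"
            "?v \<in> Wj phi j"
            using prems unfolding keep_def Wj_mem by auto
          have r2: "fst s1 r = fst s r" if "r \<notin> {9,32,33,34,35,36,37,38,40,41,42,43,44,45,46,47,48,49}" for r
            using f1 that unfolding keep_def by auto
          show "fst s1 1 = 1" using r2[of 1] regs[of 1] assms by simp
          have W: "Wj phi (Suc j) = Wj phi j" using f1(4) by (simp add: Wj_Suc insert_absorb)
          have "I ((fst s1)(30 := fst s1 30 + 3, 31 := fst s1 31 - 1), snd s1)"
            unfolding I_def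
          proof (intro conjI exI[of _ "Suc j"])
            show "Suc j \<le> L" using jL by simp
            show "fst ((fst s1)(30 := fst s1 30 + 3, 31 := fst s1 31 - 1), snd s1) 30 = N + 3 * Suc j"
              "fst ((fst s1)(30 := fst s1 30 + 3, 31 := fst s1 31 - 1), snd s1) 31 = L - Suc j"
              using r2[of 30] r2[of 31] j by simp_all
            show "goodT phi k (Wj phi (Suc j)) (\<lambda>U. snd ((fst s1)(30 := fst s1 30 + 3, 31 := fst s1 31 - 1), snd s1) (Ab + U))"
              using j(4) f1(2) W by simp
            show "\<forall>a. a < Ab \<longrightarrow> snd ((fst s1)(30 := fst s1 30 + 3, 31 := fst s1 31 - 1), snd s1) a = M a"
              using f1(2) fr by simp
            show "keep R (fst ((fst s1)(30 := fst s1 30 + 3, 31 := fst s1 31 - 1), snd s1)) ?S"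
              using r2 regs unfolding keep_def by simp
          qed
          moreover have "fst s1 31 - 1 < fst s 31" using r2[of 31] nz by simp
          moreover have "1 + (1 + (t1 + (1 + 4 + 1))) \<le> 36 * L + 30 + DT" using f1(3) tj by linarith
          ultimately show "I ((fst s1)(30 := fst s1 30 + 3, 31 := fst s1 31 - 1), snd s1) \<and>
              fst ((fst s1)(30 := fst s1 30 + 3, 31 := fst s1 31 - 1), snd s1) 31 < fst s 31 \<and>
              1 + (1 + (t1 + (1 + 4 + 1))) \<le> 36 * L + 30 + DT" by simp
        qed
        done
      done
  qed
  have W0: "Wj phi 0 = {}" unfolding Wj_def by simp
  show ?thesis
    unfolding mainl_def
    apply (rule wp_Add_seq, rule wp_Add_seq)
    apply (rule wp_while_rule[where I = I and \<mu> = "\<lambda>s. fst s 31" and b = "36 * L + 30 + DT"])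
    subgoal using assms W0 by (auto simp: I_def keep_def intro!: exI[of _ 0])
    subgoal by (rule step)
    subgoal for t s'
      using assms by (auto simp: I_def keep_def Wj_L L_def)
    done
qed



definition bases :: com where
  "bases = Seq (Add 21 11 13) (Seq (Add 22 21 20) (Seq (Add 23 22 20) (Seq (Add 24 23 20) (Add 25 2 1))))"

definition prog :: com where
  "prog = Seq phase12 (Seq powc (Seq bases (Seq initA (Seq mainl (Seq popc final)))))"

lemma bases_spec: "wp bases (\<lambda>t s'. s' = ((fst s)(21 := fst s 11 + fst s 13, 22 := fst s 11 + fst s 13 + fst s 20,
   23 := fst s 11 + fst s 13 + fst s 20 + fst s 20, 24 := fst s 11 + fst s 13 + fst s 20 + fst s 20 + fst s 20,
   25 := fst s 2 + fst s 1), snd s) \<and> t = 5) s"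
  unfolding bases_def by simp

lemma prog_spec:
  fixes n k p :: nat and phi :: cnf
  defines "enc \<equiv> encode n phi k p"
  defines "N \<equiv> length enc" and "L \<equiv> length (lits phi)" and "P \<equiv> 2 ^ length phi" and "m \<equiv> length phi"
  defines "DT \<equiv> 8 * P + 9 + ((L + 1) * (3 * length phi + 14 * P + 45 + 1) + 2) + (13 * P + 14)"
  assumes wf: "wf_cnf n phi"
  shows "wp prog (\<lambda>t s'. (fst s' 0 \<noteq> 0 \<longleftrightarrow> max_k_sat n phi k p)
     \<and> t \<le> (2 * ((N + 1) * ((N + 1) * 13 + 5)) + 20) + ((3 * m + 5) + (5 + ((4 * P + 6)
       + (((L + 1) * (36 * L + 30 + DT + 1) + 2) + ((16 * P + 10) + (12 * P + 15))))))) (init_state enc)"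
proof -
  let ?Ab = "N + 3 * L"
  let ?Bb = "N + 3 * L + P"
  let ?Cb = "N + 3 * L + P + P"
  let ?PCb = "N + 3 * L + P + P + P"
  have P0: "0 < P" unfolding P_def by simp
  have goodT_cong: "goodT phi k W G \<Longrightarrow> (\<forall>U<P. G' U = G U) \<Longrightarrow> goodT phi k W G'" for W G G'
    unfolding goodT_def P_def by simp
  have final_eq: "(\<exists>U<P. p \<le> card (bs U) \<and> G U \<le> k) \<longleftrightarrow> max_k_sat n phi k p"
    if g: "goodT phi k (Vars phi) G" for G
  proof -
    have "(\<exists>U<P. p \<le> card (bs U) \<and> G U \<le> k) \<longleftrightarrow> (\<exists>U<P. p \<le> card (bs U) \<and> QQ phi (Vars phi) k (bs U))"
      using g unfolding goodT_def P_def by auto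
    also have "\<dots> \<longleftrightarrow> (\<exists>T. QQ phi (Vars phi) k T \<and> p \<le> card T)"
    proof
      assume "\<exists>U<P. p \<le> card (bs U) \<and> QQ phi (Vars phi) k (bs U)" then show "\<exists>T. QQ phi (Vars phi) k T \<and> p \<le> card T" by blast
    next
      assume "\<exists>T. QQ phi (Vars phi) k T \<and> p \<le> card T"
      then obtain T where T: "QQ phi (Vars phi) k T" "p \<le> card T" by blast
      have "T \<subseteq> {..<length phi}" using T(1) satW_sub unfolding QQ_def by blast
      then obtain U where "U < P" "bs U = T" using bs_surj unfolding P_def by blast
      then show "\<exists>U<P. p \<le> card (bs U) \<and> QQ phi (Vars phi) k (bs U)" using T by blast
    qed
    also have "\<dots> \<longleftrightarrow> max_k_sat n phi k p" using answer_char[OF wf] by simp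
    finally show ?thesis .
  qed
  show ?thesis
    unfolding prog_def
  proof (rule wp_seqI[OF phase12_spec[where n=n and k=k and p=p and phi=phi, folded enc_def]])
    fix t1 :: nat and s1 :: state assume H1: "fst s1 8 = length (lits phi) \<and> fst s1 10 = length enc
     \<and> fst s1 11 = length enc + 3 * length (lits phi) \<and> fst s1 1 = 1 \<and> fst s1 2 = k \<and> fst s1 3 = p
     \<and> fst s1 4 = length phi \<and> fst s1 13 = 0 \<and> fst s1 0 = 0
     \<and> arrOK phi (length enc) (length (lits phi)) (snd s1)
     \<and> t1 \<le> 2 * ((length enc + 1) * ((length enc + 1) * 13 + 5)) + 20"
    show "wp (Seq powc (Seq bases (Seq initA (Seq mainl (Seq popc final)))))
      (\<lambda>t2 s2. (fst s2 0 \<noteq> 0 \<longleftrightarrow> max_k_sat n phi k p)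
     \<and> t1 + t2 \<le> (2 * ((N + 1) * ((N + 1) * 13 + 5)) + 20) + ((3 * m + 5) + (5 + ((4 * P + 6)
       + (((L + 1) * (36 * L + 30 + DT + 1) + 2) + ((16 * P + 10) + (12 * P + 15))))))) s1"
    proof (rule wp_pair, rule wp_seqI[OF powc_spec[of "fst s1" m "snd s1"]])
      show "fst s1 4 = m" "fst s1 13 = 0" "fst s1 1 = 1" using H1 unfolding m_def by auto
    next
      fix t2 :: nat and s2 :: state assume H2: "fst s2 20 = 2^m \<and> (\<forall>r. r \<notin> {20,26} \<longrightarrow> fst s2 r = fst s1 r) \<and> snd s2 = snd s1
        \<and> t2 \<le> 3 * m + 5"
      show "wp (Seq bases (Seq initA (Seq mainl (Seq popc final))))
      (\<lambda>t3 s3. (fst s3 0 \<noteq> 0 \<longleftrightarrow> max_k_sat n phi k p)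
     \<and> t1 + (t2 + t3) \<le> (2 * ((N + 1) * ((N + 1) * 13 + 5)) + 20) + ((3 * m + 5) + (5 + ((4 * P + 6)
       + (((L + 1) * (36 * L + 30 + DT + 1) + 2) + ((16 * P + 10) + (12 * P + 15))))))) s2"
      proof (rule wp_seqI[OF bases_spec])
        fix t3 :: nat and s3 :: state assume H3: "s3 = ((fst s2)(21 := fst s2 11 + fst s2 13, 22 := fst s2 11 + fst s2 13 + fst s2 20,
          23 := fst s2 11 + fst s2 13 + fst s2 20 + fst s2 20, 24 := fst s2 11 + fst s2 13 + fst s2 20 + fst s2 20 + fst s2 20,
          25 := fst s2 2 + fst s2 1), snd s2) \<and> t3 = 5"
        let ?R3 = "fst s3"
        have R3: "?R3 1 = 1" "?R3 2 = k" "?R3 3 = p" "?R3 4 = m" "?R3 8 = L" "?R3 10 = N" "?R3 13 = 0"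
          "?R3 20 = P" "?R3 21 = ?Ab" "?R3 22 = ?Bb" "?R3 23 = ?Cb" "?R3 24 = ?PCb" "?R3 25 = Suc k"
          using H1 H2 H3 unfolding N_def L_def P_def m_def by auto
        have M3: "snd s3 = snd s1" using H2 H3 by simp
        show "wp (Seq initA (Seq mainl (Seq popc final)))
          (\<lambda>t4 s4. (fst s4 0 \<noteq> 0 \<longleftrightarrow> max_k_sat n phi k p)
          \<and> t1 + (t2 + (t3 + t4)) \<le> (2 * ((N + 1) * ((N + 1) * 13 + 5)) + 20) + ((3 * m + 5) + (5 + ((4 * P + 6)
          + (((L + 1) * (36 * L + 30 + DT + 1) + 2) + ((16 * P + 10) + (12 * P + 15))))))) s3"
        proof (rule wp_pair, rule wp_seqI[OF initA_spec[of ?R3 P ?Ab "Suc k" "snd s3"]])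
          show "?R3 20 = P" "?R3 21 = ?Ab" "?R3 25 = Suc k" "?R3 13 = 0" "?R3 1 = 1" "0 < P" using R3 P0 by auto
        next
          fix t4 :: nat and s4 :: state
          assume H4: "(\<forall>U<P. snd s4 (?Ab + U) = (if U = 0 then 0 else Suc k))
            \<and> (\<forall>a. a < ?Ab \<or> ?Ab + P \<le> a \<longrightarrow> snd s4 a = snd s3 a) \<and> keep ?R3 (fst s4) {44,46}
            \<and> t4 \<le> 4 * P + 6"
          let ?R4 = "fst s4"
          have R4: "?R4 r = ?R3 r" if "r \<notin> {44,46}" for r using H4 that unfolding keep_def by auto
          have arr4: "arrOK phi N L (snd s4)" using H1 H4 M3 unfolding arrOK_def N_def L_def by auto
          have g4: "goodT phi k {} (\<lambda>U. snd s4 (?Ab + U))"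
            by (rule goodT_cong[OF goodT_init]) (use H4 in auto)
          show "wp (Seq mainl (Seq popc final))
            (\<lambda>t5 s5. (fst s5 0 \<noteq> 0 \<longleftrightarrow> max_k_sat n phi k p)
            \<and> t1 + (t2 + (t3 + (t4 + t5))) \<le> (2 * ((N + 1) * ((N + 1) * 13 + 5)) + 20) + ((3 * m + 5) + (5 + ((4 * P + 6)
            + (((L + 1) * (36 * L + 30 + DT + 1) + 2) + ((16 * P + 10) + (12 * P + 15))))))) s4"
          proof (rule wp_pair, rule wp_seqI[OF mainl_spec[where R = "fst s4" and M = "snd s4" and N = N and Ab = ?Ab
              and Bb = ?Bb and Cb = ?Cb and k = k and phi = phi]])
            show "?R4 10 = N" "?R4 8 = length (lits phi)" "?R4 20 = 2 ^ length phi" "?R4 21 = ?Ab" "?R4 22 = ?Bb"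
              "?R4 23 = ?Cb" "?R4 25 = Suc k" "?R4 13 = 0" "?R4 1 = 1"
              using R4 R3 unfolding L_def P_def by auto
            show "arrOK phi N (length (lits phi)) (snd s4)" using arr4 unfolding L_def .
            show "?Ab = N + 3 * length (lits phi)" "?Bb = ?Ab + 2 ^ length phi" "?Cb = ?Bb + 2 ^ length phi"
              unfolding L_def P_def by auto
            show "goodT phi k {} (\<lambda>U. snd s4 (?Ab + U))" by (rule g4)
          next
            fix t5 :: nat and s5 :: state
            assume H5: "goodT phi k (Vars phi) (\<lambda>U. snd s5 (?Ab + U))
              \<and> (\<forall>a. a < ?Ab \<longrightarrow> snd s5 a = snd s4 a) \<and> keep ?R4 (fst s5) {9,30,31,32,33,34,35,36,37,38,40,41,42,43,44,45,46,47,48,49}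
              \<and> t5 \<le> (length (lits phi) + 1) * (36 * length (lits phi) + 30 + (8 * 2 ^ length phi + 9 + ((length (lits phi) + 1) * (3 * length phi + 14 * 2 ^ length phi + 45 + 1) + 2) + (13 * 2 ^ length phi + 14)) + 1) + 2"
            let ?R5 = "fst s5"
            have R5: "?R5 r = ?R3 r" if "r \<notin> {9,30,31,32,33,34,35,36,37,38,40,41,42,43,44,45,46,47,48,49}" for r
              using H5 R4 that unfolding keep_def by auto
            show "wp (Seq popc final)
              (\<lambda>t6 s6. (fst s6 0 \<noteq> 0 \<longleftrightarrow> max_k_sat n phi k p)
              \<and> t1 + (t2 + (t3 + (t4 + (t5 + t6)))) \<le> (2 * ((N + 1) * ((N + 1) * 13 + 5)) + 20) + ((3 * m + 5) + (5 + ((4 * P + 6)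
              + (((L + 1) * (36 * L + 30 + DT + 1) + 2) + ((16 * P + 10) + (12 * P + 15))))))) s5"
            proof (rule wp_pair, rule wp_seqI[OF popc_spec[of ?R5 P ?PCb "snd s5"]])
              show "?R5 20 = P" "0 < P" "?R5 24 = ?PCb" "?R5 13 = 0" "?R5 1 = 1" using R5 R3 P0 by auto
            next
              fix t6 :: nat and s6 :: state
              assume H6: "(\<forall>U<P. snd s6 (?PCb + U) = card (bs U))
                \<and> (\<forall>a. \<not> (?PCb \<le> a \<and> a < ?PCb + P) \<longrightarrow> snd s6 a = snd s5 a)
                \<and> keep ?R5 (fst s6) {37,38,42,44,45,46,47,49} \<and> t6 \<le> 16 * P + 10"
              let ?R6 = "fst s6"
              have R6: "?R6 r = ?R3 r" if "r \<notin> {9,30,31,32,33,34,35,36,37,38,40,41,42,43,44,45,46,47,48,49}" for r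
                using H6 R5 that unfolding keep_def by auto
              show "wp final
                (\<lambda>t7 s7. (fst s7 0 \<noteq> 0 \<longleftrightarrow> max_k_sat n phi k p)
                \<and> t1 + (t2 + (t3 + (t4 + (t5 + (t6 + t7))))) \<le> (2 * ((N + 1) * ((N + 1) * 13 + 5)) + 20) + ((3 * m + 5) + (5 + ((4 * P + 6)
                + (((L + 1) * (36 * L + 30 + DT + 1) + 2) + ((16 * P + 10) + (12 * P + 15))))))) s6"
              proof (rule wp_pair, rule wp_mono[OF final_spec[of ?R6 P ?PCb ?Ab p k "snd s6"]])
                show "?R6 20 = P" "?R6 24 = ?PCb" "?R6 21 = ?Ab" "?R6 3 = p" "?R6 2 = k" "?R6 13 = 0" "?R6 1 = 1"
                  using R6 R3 by auto
              next
                fix t7 :: nat and s7 :: state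
                assume H7: "(fst s7 0 \<noteq> 0 \<longleftrightarrow> (\<exists>U<P. p \<le> snd s6 (?PCb + U) \<and> snd s6 (?Ab + U) \<le> k)) \<and> t7 \<le> 12 * P + 15"
                have "(\<exists>U<P. p \<le> snd s6 (?PCb + U) \<and> snd s6 (?Ab + U) \<le> k) \<longleftrightarrow>
                      (\<exists>U<P. p \<le> card (bs U) \<and> snd s5 (?Ab + U) \<le> k)"
                  using H6 by auto
                also have "\<dots> \<longleftrightarrow> max_k_sat n phi k p" using final_eq H5 by blast
                finally have c: "fst s7 0 \<noteq> 0 \<longleftrightarrow> max_k_sat n phi k p" using H7 by simp
                have tm: "t1 + (t2 + (t3 + (t4 + (t5 + (t6 + t7))))) \<le> (2 * ((N + 1) * ((N + 1) * 13 + 5)) + 20) + ((3 * m + 5) + (5 + ((4 * P + 6)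
                + (((L + 1) * (36 * L + 30 + DT + 1) + 2) + ((16 * P + 10) + (12 * P + 15))))))"
                  using H1 H2 H3 H4 H5 H6 H7 unfolding N_def L_def P_def DT_def by linarith
                show "(fst s7 0 \<noteq> 0 \<longleftrightarrow> max_k_sat n phi k p)
                \<and> t1 + (t2 + (t3 + (t4 + (t5 + (t6 + t7))))) \<le> (2 * ((N + 1) * ((N + 1) * 13 + 5)) + 20) + ((3 * m + 5) + (5 + ((4 * P + 6)
                + (((L + 1) * (36 * L + 30 + DT + 1) + 2) + ((16 * P + 10) + (12 * P + 15))))))" using c tm by blast
              qed
            qed
          qed
        qed
      qed
    qed
  qed
qed

lemma time_bound:
  fixes N L m P :: nat
  assumes "L \<le> N" "m \<le> N" "1 \<le> P"
  shows "(2 * ((N + 1) * ((N + 1) * 13 + 5)) + 20) + ((3 * m + 5) + (5 + ((4 * P + 6)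
       + (((L + 1) * (36 * L + 30 + (8 * P + 9 + ((L + 1) * (3 * m + 14 * P + 45 + 1) + 2) + (13 * P + 14)) + 1) + 2)
       + ((16 * P + 10) + (12 * P + 15))))))
     \<le> 1000 * (P * (N + 1) ^ 3)"
proof -
  define X where "X = N + 1"
  have X1: "1 \<le> X" unfolding X_def by simp
  have LX: "L + 1 \<le> X" "L \<le> X" "m \<le> X" "N + 1 = X" using assms unfolding X_def by auto
  have p1: "P \<le> P * X" using X1 by simp
  have p2: "P * X \<le> P * X ^ 2" using X1 by (simp add: power2_eq_square)
  have p3: "P * X ^ 2 \<le> P * X ^ 3" using X1 by (simp add: power3_eq_cube power2_eq_square)
  have x1: "X \<le> P * X" using assms by simp
  have x2: "X * X \<le> P * X ^ 2" using assms by (simp add: power2_eq_square)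
  have a1: "3 * m + 14 * P + 45 + 1 \<le> 63 * (P * X)" using LX p1 x1 assms X1 by linarith
  have a2: "(L + 1) * (3 * m + 14 * P + 45 + 1) \<le> X * (63 * (P * X))"
    by (rule mult_mono[OF LX(1) a1]) auto
  have a2': "X * (63 * (P * X)) = 63 * (P * X ^ 2)" by (simp add: power2_eq_square)
  define DT where "DT = 8 * P + 9 + ((L + 1) * (3 * m + 14 * P + 45 + 1) + 2) + (13 * P + 14)"
  have dt: "DT \<le> 109 * (P * X ^ 2)" unfolding DT_def using a2 a2' p1 p2 assms by linarith
  have b1: "36 * L + 30 + DT + 1 \<le> 176 * (P * X ^ 2)" using dt LX x1 p1 p2 x2 assms
  proof -
    have "36 * L \<le> 36 * (P * X ^ 2)" using LX x1 p1 p2 by linarith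
    moreover have "31 \<le> 31 * (P * X ^ 2)" using assms p1 p2 by linarith
    ultimately show ?thesis using dt by linarith
  qed
  have b2: "(L + 1) * (36 * L + 30 + DT + 1) \<le> X * (176 * (P * X ^ 2))"
    by (rule mult_mono[OF LX(1) b1]) auto
  have b2': "X * (176 * (P * X ^ 2)) = 176 * (P * X ^ 3)" by (simp add: power2_eq_square power3_eq_cube)
  have c1: "X * (X * 13 + 5) \<le> X * (18 * X)"
    by (rule mult_left_mono) (use X1 in auto)
  have c0: "X * (18 * X) = 18 * (X * X)" by simp
  have c1': "X * (18 * X) \<le> 18 * (P * X ^ 3)" using x2 p3 c0 by linarith
  have d1: "3 * m + 32 * P + 63 \<le> 98 * (P * X ^ 3)" using LX x1 p1 p2 p3 assms by linarith
  show ?thesis unfolding LX(4) using b2 b2' c1 c1' d1 p1 p2 p3 assms unfolding DT_def[symmetric] by linarith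
qed

lemma length_le_input_size: "length xs \<le> input_size xs"
  unfolding input_size_def by (induction xs) auto

lemma prog_correct:
  fixes n k p :: nat and phi :: cnf
  assumes wf: "wf_cnf n phi"
  shows "\<exists>t s'. exec prog (init_state (encode n phi k p)) t s' \<and> (fst s' 0 \<noteq> 0 \<longleftrightarrow> max_k_sat n phi k p)
      \<and> real t \<le> 1000 * 2 ^ length phi * (real (input_size (encode n phi k p)) + 1) ^ 3"
proof -
  let ?enc = "encode n phi k p"
  let ?N = "length ?enc"
  have W: "wp prog (\<lambda>t s'. (fst s' 0 \<noteq> 0 \<longleftrightarrow> max_k_sat n phi k p)
     \<and> t \<le> (2 * ((?N + 1) * ((?N + 1) * 13 + 5)) + 20) + ((3 * length phi + 5) + (5 + ((4 * 2 ^ length phi + 6)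
       + (((length (lits phi) + 1) * (36 * length (lits phi) + 30 + (8 * 2 ^ length phi + 9 + ((length (lits phi) + 1) * (3 * length phi + 14 * 2 ^ length phi + 45 + 1) + 2) + (13 * 2 ^ length phi + 14)) + 1) + 2)
       + ((16 * 2 ^ length phi + 10) + (12 * 2 ^ length phi + 15))))))) (init_state ?enc)"
    using prog_spec[where n = n and k = k and p = p and phi = phi, OF wf] by simp
  then obtain t s' where ex: "exec prog (init_state ?enc) t s'" and c: "fst s' 0 \<noteq> 0 \<longleftrightarrow> max_k_sat n phi k p"
    and t: "t \<le> (2 * ((?N + 1) * ((?N + 1) * 13 + 5)) + 20) + ((3 * length phi + 5) + (5 + ((4 * 2 ^ length phi + 6)
       + (((length (lits phi) + 1) * (36 * length (lits phi) + 30 + (8 * 2 ^ length phi + 9 + ((length (lits phi) + 1) * (3 * length phi + 14 * 2 ^ length phi + 45 + 1) + 2) + (13 * 2 ^ length phi + 14)) + 1) + 2)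
       + ((16 * 2 ^ length phi + 10) + (12 * 2 ^ length phi + 15))))))"
    unfolding wp_def by blast
  have LN: "length (lits phi) \<le> ?N" using lsum_cpos[of phi "length phi"] length_lits[of phi] length_encode[of n phi k p] by simp
  have mN: "length phi \<le> ?N" by (rule m_le_N)
  have tb: "t \<le> 1000 * (2 ^ length phi * (?N + 1) ^ 3)"
    using le_trans[OF t time_bound[OF LN mN, of "2 ^ length phi"]] by simp
  have Ns: "?N + 1 \<le> input_size ?enc + 1" using length_le_input_size[of ?enc] by simp
  have "(?N + 1) ^ 3 \<le> (input_size ?enc + 1) ^ 3" by (rule power_mono[OF Ns]) simp
  then have "1000 * (2 ^ length phi * (?N + 1) ^ 3) \<le> 1000 * (2 ^ length phi * (input_size ?enc + 1) ^ 3)"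
    by simp
  then have "t \<le> 1000 * (2 ^ length phi * (input_size ?enc + 1) ^ 3)" using tb by linarith
  then have "real t \<le> real (1000 * (2 ^ length phi * (input_size ?enc + 1) ^ 3))" by (simp only: of_nat_le_iff)
  then have "real t \<le> 1000 * 2 ^ length phi * (real (input_size ?enc) + 1) ^ 3" by (simp add: ac_simps)
  then show "\<exists>t s'. exec prog (init_state ?enc) t s' \<and> (fst s' 0 \<noteq> 0 \<longleftrightarrow> max_k_sat n phi k p)
      \<and> real t \<le> 1000 * 2 ^ length phi * (real (input_size ?enc) + 1) ^ 3"
    using ex c by blast
qed

theorem lemma1:
  shows "\<exists>(P :: com) (c :: real) (d :: nat). \<forall>n k p phi. wf_cnf n phi \<longrightarrow>
           (\<exists>t s'. exec P (init_state (encode n phi k p)) t s'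
              \<and> (fst s' 0 \<noteq> 0 \<longleftrightarrow> max_k_sat n phi k p)
              \<and> real t \<le> c * 2 ^ length phi * (real (input_size (encode n phi k p)) + 1) ^ d)"
  using prog_correct by blast


end
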